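(* Let $w\in W^{\mathsf A}_\infty$ and $X\in\{\mathsf B,\mathsf C,\mathsf D\}$, and if $X=\mathsf D$ assume $w(1)=1$. Then $G^X_w(\mathbf z)=\Theta(G_w(\mathbf z))$, where $G_w$ is computed by identifying $w$ with the element of $S_\infty$ obtained by replacing each $t_i$ by $s_i$.
   Context: $W^{\mathsf A}_\infty=\langle t_1,t_2,\dots\rangle$ with $t_i=(i,i+1)(-i,-i-1)$, a subgroup of the signed permutation groups $W^{\mathsf D}_\infty\subseteq W^{\mathsf B}_\infty=W^{\mathsf C}_\infty$ (signed permutations: bijections $w$ of $\mathbb Z$ with $w(-i)=-w(i)$ moving finitely many points; type D: even number of $i>0$ with $w(i)<0$); $t_i\mapsto s_i=(i,i+1)$ gives an isomorphism $W^{\mathsf A}_\infty\cong S_\infty$. $W^{\mathsf B}_\infty$ has Coxeter generators $t_0=(-1,1),t_1,\dots$ and $W^{\mathsf D}_\infty$ has $t_{-1}=(1,-2)(2,-1),t_1,\dots$; lengths $\ell^{\mathsf B}=\ell^{\mathsf C}=(\mathrm{inv}+\ell_0)/2$, $\ell^{\mathsf D}=(\mathrm{inv}-\ell_0)/2$, $\mathrm{inv}(w)=|\{i<j\in\mathbb Z:w(i)>w(j)\}|$, $\ell_0(w)=|\{i>0:w(i)<0\}|$. Demazure product $\circ$: associative, $u\circ v=uv$ if lengths add, $s\circ s=s$. Type A: $\mathcal H(w)$ = positive sequences $a$ with $s_{a_1}\circ\cdots\circ s_{a_k}=w$; $\mathcal C(a)$ = sequences $1\le b_1\le\cdots\le b_k$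 with $b_j<b_{j+1}$ whenever $a_j\le a_{j+1}$; $G_w=\sum_{a\in\mathcal H(w)}\sum_{b\in\mathcal C(a)}\beta^{k-\ell(w)}z_{b_1}\cdots z_{b_k}$. Types B,C,D: $\mathcal H^X(w)$ = sequences with entries in $\{0,1,\dots\}$ (B, C) or $\{-1,1,2,\dots\}$ (D) and $t_{a_1}\circ\cdots\circ t_{a_k}=w$; $G^X_w=\sum_{a\in\mathcal H^X(w)}\sum_{b\in\mathcal C^X(a)}2^{|b|-\gamma(a,b)-o^X(a)}\beta^{k-\ell^X(w)}z_{b_1}\cdots z_{b_k}$ where $o^{\mathsf B}(a)=\#\{a_i=0\}$, $o^{\mathsf C}=0$, $o^{\mathsf D}(a)=\#\{a_i=\pm1\}$, $\mathcal C^X(a)$ = sequences $1\le b_1\le\cdots\le b_k$ with $b_{i-1}<b_{i+1}$ whenever $|a_{i-1}|\le|a_i|\ge|a_{i+1}|$ and $b_i<b_{i+1}$ when ($X=\mathsf B$, $a_i=a_{i+1}=0$) or ($X=\mathsf D$, $a_i=a_{i+1}=\pm1$), $|b|$ the number of distinct entries, $\gamma(a,b)=\#\{i:a_i=a_{i+1},b_i=b_{i+1}\}$. Quasisymmetric functions: for a finite integer sequence $a$, $\mathsf{mperm}(a)$ deletes each entry equal to its predecessor; a multi-permutation is a sequence with no two equal adjacent entries. For a multi-permutation $\pi$, $L^{(\beta)}_\pi=\sum_{a:\mathsf{mperm}(a)=\pi}\sum_{b\in\mathcal C(a)}\beta^{\ell(a)-\ell(\pi)}\mathbf z_b$ and $K^{(\beta)}_\pi=\sum_{a:\mathsf{mperm}(a)=\pi}\sum_{b\in\mathcal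 U(a)}\beta^{\ell(a)-\ell(\pi)}z_{|b_1|}\cdots z_{|b_k|}$, where $\mathcal U(a)$ is the set of sequences $b$ with $0\ne b_1\preceq\cdots\preceq b_k$ in the order $0\prec-1\prec1\prec-2\prec2\prec\cdots$, with $|a_i|>|a_{i+1}|$ whenever $b_i=b_{i+1}<0$ and $|a_i|<|a_{i+1}|$ whenever $b_i=b_{i+1}>0$. Every element of the ring $\mathbf{QSym}_\beta$ of quasisymmetric power series over $\mathbb Z[\beta]$ is a unique (possibly infinite) $\mathbb Z[\beta]$-combination of $L^{(\beta)}$-functions, and $\Theta:\mathbf{QSym}_\beta\to\mathbf{QSym}_\beta$ is the continuous ring endomorphism with $\Theta(L^{(\beta)}_\pi)=K^{(\beta)}_\pi$ for all multi-permutations $\pi$. *)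

theory Defs
  imports "HOL-Computational_Algebra.Polynomial" "HOL-Library.Multiset"
begin

text \<open>A monomial z_1^{m_1} z_2^{m_2} ... is an exponent function m :: nat => nat;
  a power series is a function from monomials to coefficients.\<close>

definition beta :: "rat poly" where "beta = monom 1 1"

type_synonym pseries = "(nat \<Rightarrow> nat) \<Rightarrow> rat poly"

definition mono :: "nat list \<Rightarrow> nat \<Rightarrow> nat" where
  "mono b = (\<lambda>i. count (mset b) i)"

definition sA :: "nat \<Rightarrow> nat \<Rightarrow> nat" where
  "sA i = (\<lambda>n. if n = i then i + 1 else if n = i + 1 then i else n)"

definition lenA :: "(nat \<Rightarrow> nat) \<Rightarrow> nat" where
  "lenA \<sigma> = card {(i, j). 0 < i \<and> i < j \<and> \<sigma> i > \<sigma> j}"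

definition demA_step :: "(nat \<Rightarrow> nat) \<Rightarrow> nat \<Rightarrow> (nat \<Rightarrow> nat)" where
  "demA_step u i = (let v = u \<circ> sA i in if lenA v > lenA u then v else u)"

definition demA :: "nat list \<Rightarrow> (nat \<Rightarrow> nat)" where
  "demA a = foldl demA_step id a"

definition HA :: "(nat \<Rightarrow> nat) \<Rightarrow> nat list set" where
  "HA \<sigma> = {a. (\<forall>j\<in>set a. 1 \<le> j) \<and> demA a = \<sigma>}"

definition CA :: "nat list \<Rightarrow> nat list \<Rightarrow> bool" where
  "CA a b \<longleftrightarrow> length b = length a \<and> sorted b \<and> (\<forall>x\<in>set b. 1 \<le> x) \<and>
     (\<forall>j. j + 1 < length a \<and> a ! j \<le> a ! (j + 1) \<longrightarrow> b ! j < b ! (j + 1))"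

definition GA :: "(nat \<Rightarrow> nat) \<Rightarrow> pseries" where
  "GA \<sigma> m = (\<Sum>(a, b) \<in> {(a, b). a \<in> HA \<sigma> \<and> CA a b \<and> mono b = m}.
                beta ^ (length a - lenA \<sigma>))"

datatype ctype = B | C | D

definition gen :: "int \<Rightarrow> int \<Rightarrow> int" where
  "gen j = (\<lambda>n.
     if j = 0 then (if n = 1 then -1 else if n = -1 then 1 else n)
     else if j = -1 then (if n = 1 then -2 else if n = -2 then 1
                          else if n = 2 then -1 else if n = -1 then 2 else n)
     else (if n = j then j + 1 else if n = j + 1 then j
           else if n = -j then -j - 1 else if n = -j - 1 then -j else n))"

definition invZ :: "(int \<Rightarrow> int) \<Rightarrow> nat" where
  "invZ w = card {(i, j). i < j \<and> w i > w j}"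

definition ell0 :: "(int \<Rightarrow> int) \<Rightarrow> nat" where
  "ell0 w = card {i. 0 < i \<and> w i < 0}"

definition lenX :: "ctype \<Rightarrow> (int \<Rightarrow> int) \<Rightarrow> nat" where
  "lenX X w = (if X = D then nat ((int (invZ w) - int (ell0 w)) div 2)
               else nat ((int (invZ w) + int (ell0 w)) div 2))"

definition demX_step :: "ctype \<Rightarrow> (int \<Rightarrow> int) \<Rightarrow> int \<Rightarrow> (int \<Rightarrow> int)" where
  "demX_step X u j = (let v = u \<circ> gen j in if lenX X v > lenX X u then v else u)"

definition demX :: "ctype \<Rightarrow> int list \<Rightarrow> (int \<Rightarrow> int)" where
  "demX X a = foldl (demX_step X) id a"

definition letterX :: "ctype \<Rightarrow> int \<Rightarrow> bool" where
  "letterX X j \<longleftrightarrow> (if X = D then j = -1 \<or> 1 \<le> j else 0 \<le> j)"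

definition HX :: "ctype \<Rightarrow> (int \<Rightarrow> int) \<Rightarrow> int list set" where
  "HX X w = {a. (\<forall>j\<in>set a. letterX X j) \<and> demX X a = w}"

definition CX :: "ctype \<Rightarrow> int list \<Rightarrow> nat list \<Rightarrow> bool" where
  "CX X a b \<longleftrightarrow> length b = length a \<and> sorted b \<and> (\<forall>x\<in>set b. 1 \<le> x) \<and>
     (\<forall>i. 0 < i \<and> i + 1 < length a \<and> \<bar>a ! (i - 1)\<bar> \<le> \<bar>a ! i\<bar> \<and> \<bar>a ! (i + 1)\<bar> \<le> \<bar>a ! i\<bar>
            \<longrightarrow> b ! (i - 1) < b ! (i + 1)) \<and>
     (\<forall>i. i + 1 < length a \<and>
            ((X = B \<and> a ! i = 0 \<and> a ! (i + 1) = 0) \<or>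
             (X = D \<and> a ! i = a ! (i + 1) \<and> \<bar>a ! i\<bar> = 1))
            \<longrightarrow> b ! i < b ! (i + 1))"

definition gamma :: "int list \<Rightarrow> nat list \<Rightarrow> nat" where
  "gamma a b = card {i. i + 1 < length a \<and> a ! i = a ! (i + 1) \<and> b ! i = b ! (i + 1)}"

definition oX :: "ctype \<Rightarrow> int list \<Rightarrow> nat" where
  "oX X a = (if X = B then length (filter (\<lambda>j. j = 0) a)
             else if X = C then 0 else length (filter (\<lambda>j. \<bar>j\<bar> = 1) a))"

definition GX :: "ctype \<Rightarrow> (int \<Rightarrow> int) \<Rightarrow> pseries" where
  "GX X w m = (\<Sum>(a, b) \<in> {(a, b). a \<in> HX X w \<and> CX X a b \<and> mono b = m}.
      smult ((2::rat) powi (int (card (set b)) - int (gamma a b) - int (oX X a)))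
            (beta ^ (length a - lenX X w)))"

definition multiperm :: "nat list \<Rightarrow> bool" where
  "multiperm \<pi> \<longleftrightarrow> (\<forall>i. i + 1 < length \<pi> \<longrightarrow> \<pi> ! i \<noteq> \<pi> ! (i + 1))"

text \<open>mperm deletes each entry equal to its predecessor: this is remdups_adj.\<close>
abbreviation mperm :: "nat list \<Rightarrow> nat list" where "mperm \<equiv> remdups_adj"

definition Lfun :: "nat list \<Rightarrow> pseries" where
  "Lfun \<pi> m = (\<Sum>(a, b) \<in> {(a, b). mperm a = \<pi> \<and> CA a b \<and> mono b = m}.
                 beta ^ (length a - length \<pi>))"

text \<open>The order 0 < -1 < 1 < -2 < 2 < ... on integers, via a rank function.\<close>
definition prec_rank :: "int \<Rightarrow> int" where
  "prec_rank x = (if x < 0 then 2 * (- x) - 1 else 2 * x)"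

definition UK :: "nat list \<Rightarrow> int list \<Rightarrow> bool" where
  "UK a b \<longleftrightarrow> length b = length a \<and> (\<forall>x\<in>set b. x \<noteq> 0) \<and> sorted (map prec_rank b) \<and>
     (\<forall>i. i + 1 < length a \<and> b ! i = b ! (i + 1) \<and> b ! i < 0 \<longrightarrow> a ! i > a ! (i + 1)) \<and>
     (\<forall>i. i + 1 < length a \<and> b ! i = b ! (i + 1) \<and> b ! i > 0 \<longrightarrow> a ! i < a ! (i + 1))"

definition Kfun :: "nat list \<Rightarrow> pseries" where
  "Kfun \<pi> m = (\<Sum>(a, b) \<in> {(a, b). mperm a = \<pi> \<and> UK a b \<and> mono (map (\<lambda>x. nat \<bar>x\<bar>) b) = m}.
                 beta ^ (length a - length \<pi>))"

text \<open>Theta f = g: f = sum_pi c_pi L_pi and g = sum_pi c_pi K_pi for Z[beta]-coefficients c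
  (sums taken coefficientwise, i.e. in the formal power series topology).\<close>
definition Theta_rel :: "pseries \<Rightarrow> pseries \<Rightarrow> bool" where
  "Theta_rel f g \<longleftrightarrow> (\<exists>c :: nat list \<Rightarrow> rat poly.
     (\<forall>\<pi>. c \<pi> \<noteq> 0 \<longrightarrow> multiperm \<pi> \<and> (\<forall>x\<in>set \<pi>. 1 \<le> x)) \<and>
     (\<forall>\<pi>. c \<pi> \<in> range (map_poly rat_of_int)) \<and>
     (\<forall>m. finite {\<pi>. c \<pi> \<noteq> 0 \<and> Lfun \<pi> m \<noteq> 0} \<and> finite {\<pi>. c \<pi> \<noteq> 0 \<and> Kfun \<pi> m \<noteq> 0}) \<and>
     (\<forall>m. f m = (\<Sum>\<pi> \<in> {\<pi>. c \<pi> \<noteq> 0 \<and> Lfun \<pi> m \<noteq> 0}. c \<pi> * Lfun \<pi> m)) \<and>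
     (\<forall>m. g m = (\<Sum>\<pi> \<in> {\<pi>. c \<pi> \<noteq> 0 \<and> Kfun \<pi> m \<noteq> 0}. c \<pi> * Kfun \<pi> m)))"

definition wordT :: "nat list \<Rightarrow> (int \<Rightarrow> int)" where
  "wordT is = foldr (\<lambda>i u. gen (int i) \<circ> u) is id"

definition wordS :: "nat list \<Rightarrow> (nat \<Rightarrow> nat)" where
  "wordS is = foldr (\<lambda>i u. sA i \<circ> u) is id"

end

theory Submission
  imports Defs
begin

definition Inv :: "'a::linorder set \<Rightarrow> ('a \<Rightarrow> 'b::linorder) \<Rightarrow> ('a \<times> 'a) set" where
  "Inv Dm u = {(i, j). i \<in> Dm \<and> j \<in> Dm \<and> i < j \<and> u j < u i}"

definition Phi :: "('a \<Rightarrow> 'a::linorder) \<Rightarrow> 'a \<times> 'a \<Rightarrow> 'a \<times> 'a" where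
  "Phi t p = (min (t (fst p)) (t (snd p)), max (t (fst p)) (t (snd p)))"

lemma Inv_comp_image:
  assumes inv: "\<And>i. i \<in> Dm \<Longrightarrow> t i \<in> Dm \<and> t (t i) = i"
    and iu: "inj_on u Dm"
  shows "Inv Dm (u \<circ> t) = Phi t ` ((Inv Dm u - Inv Dm t) \<union> (Inv Dm t - Inv Dm u))"
proof
  show "Inv Dm (u \<circ> t) \<subseteq> Phi t ` ((Inv Dm u - Inv Dm t) \<union> (Inv Dm t - Inv Dm u))"
  proof
    fix p assume p: "p \<in> Inv Dm (u \<circ> t)"
    obtain i j where ij: "p = (i, j)" "i \<in> Dm" "j \<in> Dm" "i < j" "u (t j) < u (t i)"
      using p unfolding Inv_def by auto
    have tij: "t i \<noteq> t j" using inv[OF ij(2)] inv[OF ij(3)] ij(4) by (metis order.irrefl)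
    show "p \<in> Phi t ` ((Inv Dm u - Inv Dm t) \<union> (Inv Dm t - Inv Dm u))"
    proof (cases "t i < t j")
      case True
      have "(t i, t j) \<in> Inv Dm u - Inv Dm t" using True ij inv[OF ij(2)] inv[OF ij(3)]
        unfolding Inv_def by auto
      moreover have "Phi t (t i, t j) = p" using True ij inv[OF ij(2)] inv[OF ij(3)]
        unfolding Phi_def by auto
      ultimately show ?thesis by force
    next
      case False
      then have F: "t j < t i" using tij by auto
      have "(t j, t i) \<in> Inv Dm t - Inv Dm u" using F ij inv[OF ij(2)] inv[OF ij(3)]
        unfolding Inv_def by auto
      moreover have "Phi t (t j, t i) = p" using F ij inv[OF ij(2)] inv[OF ij(3)]
        unfolding Phi_def by auto
      ultimately show ?thesis by force
    qed
  qed
next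
  show "Phi t ` ((Inv Dm u - Inv Dm t) \<union> (Inv Dm t - Inv Dm u)) \<subseteq> Inv Dm (u \<circ> t)"
  proof
    fix p assume "p \<in> Phi t ` ((Inv Dm u - Inv Dm t) \<union> (Inv Dm t - Inv Dm u))"
    then obtain i j where ij: "p = Phi t (i, j)" "(i, j) \<in> (Inv Dm u - Inv Dm t) \<union> (Inv Dm t - Inv Dm u)"
      by auto
    have Dm: "i \<in> Dm" "j \<in> Dm" "i < j" using ij(2) unfolding Inv_def by auto
    have tij: "t i \<noteq> t j" using inv[OF Dm(1)] inv[OF Dm(2)] Dm(3) by (metis order.irrefl)
    show "p \<in> Inv Dm (u \<circ> t)"
    proof (cases "t i < t j")
      case True
      then have "(i,j) \<in> Inv Dm u" using ij(2) Dm unfolding Inv_def by auto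
      then show ?thesis using True ij(1) Dm inv[OF Dm(1)] inv[OF Dm(2)] unfolding Inv_def Phi_def by auto
    next
      case False
      then have F: "t j < t i" using tij by auto
      then have "(i,j) \<notin> Inv Dm u" using ij(2) Dm unfolding Inv_def by auto
      then have "u i < u j" using Dm iu unfolding Inv_def inj_on_def
        by (metis (no_types, lifting) case_prodI mem_Collect_eq not_less_iff_gr_or_eq)
      then show ?thesis using F ij(1) Dm inv[OF Dm(1)] inv[OF Dm(2)] unfolding Inv_def Phi_def by auto
    qed
  qed
qed

lemma Phi_inj:
  assumes inv: "\<And>i. i \<in> Dm \<Longrightarrow> t i \<in> Dm \<and> t (t i) = i"
  shows "inj_on (Phi t) {(i, j). i \<in> Dm \<and> j \<in> Dm \<and> i < j}"
proof (rule inj_onI)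
  fix p q assume p: "p \<in> {(i, j). i \<in> Dm \<and> j \<in> Dm \<and> i < j}" and q: "q \<in> {(i, j). i \<in> Dm \<and> j \<in> Dm \<and> i < j}"
    and e: "Phi t p = Phi t q"
  obtain i j where pij: "p = (i,j)" "i \<in> Dm" "j \<in> Dm" "i < j" using p by auto
  obtain k l where qkl: "q = (k,l)" "k \<in> Dm" "l \<in> Dm" "k < l" using q by auto
  have e1: "min (t i) (t j) = min (t k) (t l)" and e2: "max (t i) (t j) = max (t k) (t l)"
    using e pij qkl unfolding Phi_def by auto
  have "{t i, t j} = {t k, t l}"
  proof -
    have "{t i, t j} = {min (t i) (t j), max (t i) (t j)}" by (simp add: min_def max_def insert_commute)
    also have "\<dots> = {min (t k) (t l), max (t k) (t l)}" using e1 e2 by simp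
    also have "\<dots> = {t k, t l}" by (simp add: min_def max_def insert_commute)
    finally show ?thesis .
  qed
  then have "t ` {t i, t j} = t ` {t k, t l}" by simp
  then have "{t (t i), t (t j)} = {t (t k), t (t l)}" by simp
  then have "{i, j} = {k, l}" using inv[OF pij(2)] inv[OF pij(3)] inv[OF qkl(2)] inv[OF qkl(3)] by simp
  then have "i = k \<and> j = l \<or> i = l \<and> j = k" by (simp add: doubleton_eq_iff)
  then show "p = q" using pij qkl by auto
qed

lemma Inv_comp_card:
  assumes inv: "\<And>i. i \<in> Dm \<Longrightarrow> t i \<in> Dm \<and> t (t i) = i"
    and iu: "inj_on u Dm"
    and fu: "finite (Inv Dm u)" and ft: "finite (Inv Dm t)"
  shows "card (Inv Dm (u \<circ> t)) + card (Inv Dm u \<inter> Inv Dm t) = card (Inv Dm u) + card (Inv Dm t - Inv Dm u)"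
proof -
  have sub: "(Inv Dm u - Inv Dm t) \<union> (Inv Dm t - Inv Dm u) \<subseteq> {(i, j). i \<in> Dm \<and> j \<in> Dm \<and> i < j}"
    unfolding Inv_def by auto
  have "card (Inv Dm (u \<circ> t)) = card ((Inv Dm u - Inv Dm t) \<union> (Inv Dm t - Inv Dm u))"
    using Inv_comp_image[OF inv iu] card_image[OF inj_on_subset[OF Phi_inj[OF inv] sub]]
    by (simp only:)
  also have "\<dots> = card (Inv Dm u - Inv Dm t) + card (Inv Dm t - Inv Dm u)"
    by (rule card_Un_disjoint) (use fu ft in auto)
  finally show ?thesis
    using card_Int_Diff[of "Inv Dm u" "Inv Dm t"] fu by simp
qed

lemma Inv_comp_finite:
  assumes inv: "\<And>i. i \<in> Dm \<Longrightarrow> t i \<in> Dm \<and> t (t i) = i"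
    and iu: "inj_on u Dm"
    and fu: "finite (Inv Dm u)" and ft: "finite (Inv Dm t)"
  shows "finite (Inv Dm (u \<circ> t))"
  using Inv_comp_image[OF inv iu] fu ft by (simp only:) auto

lemma gen_0: "gen 0 n = (if n = 1 then -1 else if n = -1 then 1 else n)"
  unfolding gen_def by simp
lemma gen_m1: "gen (-1) n = (if n = 1 then -2 else if n = -2 then 1
                          else if n = 2 then -1 else if n = -1 then 2 else n)"
  unfolding gen_def by simp
lemma gen_pos: "1 \<le> j \<Longrightarrow> gen j n = (if n = j then j + 1 else if n = j + 1 then j
           else if n = -j then -j - 1 else if n = -j - 1 then -j else n)"
  unfolding gen_def by simp
lemma gen_cases: "-1 \<le> (j::int) \<Longrightarrow> (j = -1 \<Longrightarrow> P) \<Longrightarrow> (j = 0 \<Longrightarrow> P) \<Longrightarrow> (1 \<le> j \<Longrightarrow> P) \<Longrightarrow> P"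
proof -
  assume "-1 \<le> j" "(j = -1 \<Longrightarrow> P)" "(j = 0 \<Longrightarrow> P)" "(1 \<le> j \<Longrightarrow> P)"
  moreover have "j = -1 \<or> j = 0 \<or> 1 \<le> j" using \<open>-1 \<le> j\<close> by linarith
  ultimately show P by blast
qed
lemma gen_gen_pos: "1 \<le> j \<Longrightarrow> gen j (gen j n) = n"
  unfolding gen_pos by (simp split: if_splits)
lemma gen_gen: "-1 \<le> j \<Longrightarrow> gen j (gen j n) = n"
  apply (erule gen_cases)
  by (auto simp: gen_0 gen_m1 gen_gen_pos)
lemma gen_odd: "-1 \<le> j \<Longrightarrow> gen j (-n) = - gen j n"
  apply (erule gen_cases)
  by (auto simp: gen_0 gen_m1 gen_pos)
lemma gen_fix: "-1 \<le> j \<Longrightarrow> \<bar>j\<bar> + 2 < \<bar>n\<bar> \<Longrightarrow> gen j n = n"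
  apply (erule gen_cases)
  by (auto simp: gen_0 gen_m1 gen_pos)

lemma Inv_gen_pos: "1 \<le> j \<Longrightarrow> Inv UNIV (gen j) = {(j, j+1), (-j-1, -j)}"
proof (intro equalityI subsetI)
  fix p assume j: "1 \<le> j" and p: "p \<in> Inv UNIV (gen j)"
  obtain a b where ab: "p = (a,b)" "a < b" "gen j b < gen j a" using p unfolding Inv_def by auto
  show "p \<in> {(j, j+1), (-j-1, -j)}"
    using ab j unfolding gen_pos[OF j] by (simp split: if_splits)
next
  fix p assume j: "1 \<le> j" and p: "p \<in> {(j, j+1), (-j-1, -j)}"
  then show "p \<in> Inv UNIV (gen j)" unfolding Inv_def gen_pos[OF j] by auto
qed
lemma Inv_gen_0: "Inv UNIV (gen 0) = {(-1, 0), (-1, 1), (0, 1)}"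
proof (intro equalityI subsetI)
  fix p assume p: "p \<in> Inv UNIV (gen 0)"
  obtain a b where ab: "p = (a,b)" "a < b" "gen 0 b < gen 0 a" using p unfolding Inv_def by auto
  show "p \<in> {(-1, 0), (-1, 1), (0, 1)}"
    using ab unfolding gen_0 by (simp split: if_splits)
next
  fix p :: "int \<times> int" assume p: "p \<in> {(-1, 0), (-1, 1), (0, 1)}"
  then show "p \<in> Inv UNIV (gen 0)" unfolding Inv_def gen_0 by auto
qed

lemma Inv_gen_m1: "Inv UNIV (gen (-1)) = {(-2,0),(-2,1),(-2,2),(-1,0),(-1,1),(-1,2),(0,1),(0,2)}"
proof (intro equalityI subsetI)
  fix p assume p: "p \<in> Inv UNIV (gen (-1))"
  obtain a b where ab: "p = (a,b)" "a < b" "gen (-1) b < gen (-1) a" using p unfolding Inv_def by auto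
  show "p \<in> {(-2,0),(-2,1),(-2,2),(-1,0),(-1,1),(-1,2),(0,1),(0,2)}"
    using ab unfolding gen_m1 by (simp split: if_splits)
next
  fix p :: "int \<times> int" assume p: "p \<in> {(-2,0),(-2,1),(-2,2),(-1,0),(-1,1),(-1,2),(0,1),(0,2)}"
  then show "p \<in> Inv UNIV (gen (-1))" unfolding Inv_def gen_m1 by auto
qed

definition finA :: "(nat \<Rightarrow> nat) \<Rightarrow> bool" where
  "finA u \<longleftrightarrow> inj u \<and> u 0 = 0 \<and> (\<exists>K. \<forall>n>K. u n = n)"

lemma lenA_Inv: "lenA u = card (Inv {0<..} u)"
  unfolding lenA_def Inv_def by (rule arg_cong[where f=card]) auto

lemma sA_sA[simp]: "sA k (sA k n) = n"
  unfolding sA_def by auto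

lemma sA_comp_sA[simp]: "u \<circ> sA k \<circ> sA k = u"
  by (auto simp: fun_eq_iff)

lemma sA_0[simp]: "1 \<le> k \<Longrightarrow> sA k 0 = 0"
  unfolding sA_def by auto

lemma sA_pos: "1 \<le> k \<Longrightarrow> 0 < n \<Longrightarrow> 0 < sA k n"
  unfolding sA_def by auto

lemma inj_sA: "inj (sA k)"
  by (metis injI sA_sA)

lemma finA_comp: assumes "finA u" "1 \<le> k" shows "finA (u \<circ> sA k)"
proof -
  obtain K where K: "\<forall>n>K. u n = n" using assms unfolding finA_def by auto
  have "\<forall>n>max K (k+1). (u \<circ> sA k) n = n" using K by (auto simp: sA_def)
  moreover have "inj (u \<circ> sA k)" using assms inj_sA unfolding finA_def by (blast intro: inj_compose)
  moreover have "(u \<circ> sA k) 0 = 0" using assms unfolding finA_def by simp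
  ultimately show ?thesis unfolding finA_def by blast
qed

lemma finA_comp_left: assumes "finA u" "1 \<le> k" shows "finA (sA k \<circ> u)"
proof -
  obtain K where K: "\<forall>n>K. u n = n" using assms unfolding finA_def by auto
  have "\<forall>n>max K (k+1). (sA k \<circ> u) n = n" using K by (auto simp: sA_def)
  moreover have "inj (sA k \<circ> u)" using assms inj_sA unfolding finA_def by (blast intro: inj_compose)
  moreover have "(sA k \<circ> u) 0 = 0" using assms unfolding finA_def by simp
  ultimately show ?thesis unfolding finA_def by blast
qed

lemma finA_id: "finA id" unfolding finA_def by auto

lemma finA_maps: assumes "finA u" "\<forall>n>K. u n = n" "n \<le> K" shows "u n \<le> K"
proof (rule ccontr)
  assume "\<not> u n \<le> K"
  then have "u (u n) = u n" using assms(2) by auto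
  then have "u n = n" using assms(1) unfolding finA_def by (meson injD)
  then show False using \<open>\<not> u n \<le> K\<close> assms(3) by simp
qed

lemma finA_pos: assumes "finA u" "0 < n" shows "0 < u n"
  using assms unfolding finA_def by (metis gr0I injD)

lemma finite_InvA: assumes "finA u" shows "finite (Inv {0<..} u)"
proof -
  obtain K where K: "\<forall>n>K. u n = n" using assms unfolding finA_def by auto
  have "Inv {0<..} u \<subseteq> {..K} \<times> {..K}"
  proof
    fix p assume p: "p \<in> Inv {0<..} u"
    obtain i j where ij: "p = (i,j)" "i < j" "u j < u i" using p unfolding Inv_def by auto
    have "j \<le> K"
    proof (rule ccontr)
      assume "\<not> j \<le> K"
      then have "u j = j" using K by auto
      show False
      proof (cases "i \<le> K")
        case True then have "u i \<le> K" using finA_maps[OF assms K] by auto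
        then show False using ij \<open>u j = j\<close> \<open>\<not> j \<le> K\<close> by auto
      next
        case False then show False using K ij \<open>u j = j\<close> by auto
      qed
    qed
    then show "p \<in> {..K} \<times> {..K}" using ij by auto
  qed
  then show ?thesis by (rule finite_subset) auto
qed

lemma Inv_sA: "1 \<le> k \<Longrightarrow> Inv {0<..} (sA k) = {(k, k+1)}"
  unfolding Inv_def sA_def by (auto split: if_splits)

lemma sA_inv: "1 \<le> k \<Longrightarrow> i \<in> {0<..} \<Longrightarrow> sA k i \<in> {0<..} \<and> sA k (sA k i) = i"
  using sA_pos by auto

lemma lenA_comp:
  assumes "finA u" "1 \<le> k"
  shows "lenA (u \<circ> sA k) = (if u k < u (k+1) then lenA u + 1 else lenA u - 1)"
proof -
  have iu: "inj_on u {0<..}" using assms unfolding finA_def by (auto intro: inj_on_subset)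
  have e: "card (Inv {0<..} (u \<circ> sA k)) + card (Inv {0<..} u \<inter> Inv {0<..} (sA k))
      = card (Inv {0<..} u) + card (Inv {0<..} (sA k) - Inv {0<..} u)"
    using Inv_comp_card[OF sA_inv[OF assms(2)] iu finite_InvA[OF assms(1)]] Inv_sA[OF assms(2)]
    by simp
  have ne: "u k \<noteq> u (k+1)" using assms unfolding finA_def by (metis injD n_not_Suc_n Suc_eq_plus1)
  show ?thesis
  proof (cases "u k < u (k+1)")
    case True
    then have "(k, k+1) \<notin> Inv {0<..} u" unfolding Inv_def by auto
    then show ?thesis using e True unfolding lenA_Inv by (simp add: Inv_sA[OF assms(2)] insert_Diff_if)
  next
    case False
    then have "(k, k+1) \<in> Inv {0<..} u" using ne assms(2) unfolding Inv_def by auto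
    then show ?thesis using e False unfolding lenA_Inv by (simp add: Inv_sA[OF assms(2)] insert_Diff_if)
  qed
qed

lemma demA_step_cases: "demA_step u k = u \<or> demA_step u k = u \<circ> sA k"
  unfolding demA_step_def Let_def by auto

lemma demA_step_finA: "finA u \<Longrightarrow> 1 \<le> k \<Longrightarrow> finA (demA_step u k)"
  using demA_step_cases finA_comp by metis

lemma demA_step_idem: "demA_step (demA_step u k) k = demA_step u k"
  unfolding demA_step_def Let_def by auto

lemma demA_step_asc: "finA u \<Longrightarrow> 1 \<le> k \<Longrightarrow> u k < u (k+1) \<Longrightarrow> demA_step u k = u \<circ> sA k"
  unfolding demA_step_def Let_def using lenA_comp by auto

lemma demA_step_desc: "finA u \<Longrightarrow> 1 \<le> k \<Longrightarrow> \<not> u k < u (k+1) \<Longrightarrow> demA_step u k = u"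
  unfolding demA_step_def Let_def using lenA_comp by auto

lemma foldl_remdups_adj:
  "foldl demA_step u (remdups_adj a) = foldl demA_step u a"
proof (induction a arbitrary: u rule: remdups_adj.induct)
  case 1 then show ?case by simp
next
  case (2 x) then show ?case by simp
next
  case (3 x y xs)
  show ?case
  proof (cases "x = y")
    case True
    then show ?thesis using 3(1)[OF True, of u] by (simp add: demA_step_idem)
  next
    case False
    then show ?thesis using 3(2)[OF False, of "demA_step u x"] by simp
  qed
qed

lemma demA_mperm: "demA (mperm a) = demA a"
  unfolding demA_def by (rule foldl_remdups_adj)

lemma foldl_finA: "finA u \<Longrightarrow> \<forall>k\<in>set a. 1 \<le> k \<Longrightarrow> finA (foldl demA_step u a)"
proof (induction a arbitrary: u)
  case Nil then show ?case by simp
next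
  case (Cons k a)
  then have "finA (demA_step u k)" using demA_step_finA by simp
  then show ?case using Cons by simp
qed

lemma demA_finA: "\<forall>k\<in>set a. 1 \<le> k \<Longrightarrow> finA (demA a)"
  unfolding demA_def using foldl_finA finA_id by blast

lemma lenA_id: "lenA id = 0"
proof -
  have "lenA id = card ({} :: (nat \<times> nat) set)" unfolding lenA_def by (rule arg_cong[where f=card]) auto
  then show ?thesis by simp
qed

lemma lenA_demA_le: "\<forall>k\<in>set a. 1 \<le> k \<Longrightarrow> lenA (demA a) \<le> length a"
proof (induction a rule: rev_induct)
  case Nil then show ?case using lenA_id by (simp add: demA_def id_def)
next
  case (snoc k a)
  have f: "finA (demA a)" using snoc demA_finA by auto
  have k: "1 \<le> k" using snoc by auto
  have "demA (a @ [k]) = demA_step (demA a) k" by (simp add: demA_def)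
  moreover have "lenA (demA_step (demA a) k) \<le> lenA (demA a) + 1"
    using demA_step_cases[of "demA a" k] lenA_comp[OF f k] by auto
  ultimately show ?case using snoc by auto
qed

definition Jk :: "nat \<Rightarrow> (nat \<Rightarrow> nat) \<Rightarrow> bool" where
  "Jk k u \<longleftrightarrow> (\<exists>i. 1 \<le> i \<and> i \<le> k \<and> k < u i)"

lemma finA_onto:
  assumes "finA u" "\<forall>i\<in>S. 1 \<le> u i \<and> u i \<le> k" "finite S" "card S = k"
  shows "u ` S = {1..k}"
proof -
  have "u ` S \<subseteq> {1..k}" using assms(2) by auto
  moreover have "card (u ` S) = k" using assms(1,4) unfolding finA_def
    by (metis card_image inj_on_subset subset_UNIV)
  ultimately show ?thesis by (metis card_atLeastAtMost card_subset_eq diff_Suc_1 finite_atLeastAtMost)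
qed

lemma Jk_after:
  assumes "finA u" "1 \<le> k"
  shows "Jk k (demA_step u k)"
proof (cases "u k < u (k+1)")
  case True
  then have d: "demA_step u k = u \<circ> sA k" using demA_step_asc assms by auto
  show ?thesis
  proof (rule ccontr)
    assume nJ: "\<not> Jk k (demA_step u k)"
    let ?S = "insert (k+1) {1..k-1}"
    have S: "\<forall>i\<in>?S. 1 \<le> u i \<and> u i \<le> k"
    proof
      fix i assume i: "i \<in> ?S"
      have "i = sA k (sA k i)" by simp
      have "sA k i \<in> {1..k}" using i assms(2) unfolding sA_def by auto
      then have "u (sA k (sA k i)) \<le> k" using nJ d unfolding Jk_def by auto
      moreover have "1 \<le> u i" using finA_pos[OF assms(1), of i] i by auto
      ultimately show "1 \<le> u i \<and> u i \<le> k" by simp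
    qed
    have cS: "card ?S = k" using assms(2) by simp
    have img: "u ` ?S = {1..k}" using finA_onto[OF assms(1) S _ cS] by simp
    have "k \<notin> ?S" by auto
    then have "u k \<notin> u ` ?S" using assms(1) unfolding finA_def by (simp add: inj_image_mem_iff inj_eq)
    then have "u k > k \<or> u k = 0" using img by auto
    moreover have "u k \<noteq> 0" using finA_pos[OF assms(1)] assms(2) by auto
    ultimately have "u k > k" by simp
    moreover have "u (k+1) \<le> k" using S by auto
    ultimately show False using True by simp
  qed
next
  case False
  then have d: "demA_step u k = u" using demA_step_desc assms by auto
  show ?thesis
  proof (rule ccontr)
    assume nJ: "\<not> Jk k (demA_step u k)"
    have S: "\<forall>i\<in>{1..k}. 1 \<le> u i \<and> u i \<le> k"
      using nJ d finA_pos[OF assms(1)] unfolding Jk_def by (auto simp: Suc_leI)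
    have img: "u ` {1..k} = {1..k}" using finA_onto[OF assms(1) S] by simp
    have "u (k+1) \<notin> u ` {1..k}" using assms(1) unfolding finA_def by (simp add: inj_image_mem_iff)
    then have "u (k+1) > k" using img finA_pos[OF assms(1), of "k+1"] by auto
    moreover have "u k \<le> k" using S assms(2) by auto
    ultimately show False using False by simp
  qed
qed

lemma Jk_pres:
  assumes "finA u" "1 \<le> j" "Jk k u"
  shows "Jk k (demA_step u j)"
proof -
  obtain i where i: "1 \<le> i" "i \<le> k" "k < u i" using assms(3) unfolding Jk_def by auto
  consider "demA_step u j = u" | "demA_step u j = u \<circ> sA j" using demA_step_cases by blast
  then show ?thesis
  proof cases
    case 1 then show ?thesis using assms by simp
  next
    case 2
    show ?thesis
    proof (cases "j = k")
      case False
      have "sA j i \<in> {1..k}" using i False assms(2) unfolding sA_def by auto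
      moreover have "(u \<circ> sA j) (sA j i) = u i" by simp
      ultimately show ?thesis using 2 i unfolding Jk_def by (metis atLeastAtMost_iff)
    next
      case True
      show ?thesis using Jk_after[OF assms(1)] assms(2) True by simp
    qed
  qed
qed

lemma Jk_foldl: "finA u \<Longrightarrow> \<forall>j\<in>set a. 1 \<le> j \<Longrightarrow> (k \<in> set a \<or> Jk k u) \<Longrightarrow> Jk k (foldl demA_step u a)"
proof (induction a arbitrary: u)
  case Nil then show ?case by simp
next
  case (Cons j a)
  have j: "1 \<le> j" using Cons by simp
  have f: "finA (demA_step u j)" using demA_step_finA Cons j by simp
  have "k \<in> set a \<or> Jk k (demA_step u j)"
  proof (cases "k = j")
    case True then show ?thesis using Jk_after[OF Cons(2) j] by simp
  next
    case False
    then have "k \<in> set a \<or> Jk k u" using Cons(4) by simp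
    then show ?thesis using Jk_pres[OF Cons(2) j] by blast
  qed
  then show ?case using Cons f by simp
qed

lemma Jk_demA: "\<forall>j\<in>set a. 1 \<le> j \<Longrightarrow> k \<in> set a \<Longrightarrow> Jk k (demA a)"
  unfolding demA_def using Jk_foldl finA_id by blast

lemma Jk_bound: assumes "finA u" "\<forall>n>K. u n = n" "Jk k u" shows "k < K"
proof (rule ccontr)
  assume "\<not> k < K"
  obtain i where i: "1 \<le> i" "i \<le> k" "k < u i" using assms(3) unfolding Jk_def by auto
  show False
  proof (cases "i \<le> K")
    case True then show False using finA_maps[OF assms(1,2) True] i \<open>\<not> k < K\<close> by simp
  next
    case False then show False using assms(2) i by auto
  qed
qed

lemma wordS_finA: "\<forall>i\<in>set ws. 1 \<le> i \<Longrightarrow> finA (wordS ws)"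
  by (induction ws) (auto simp: wordS_def finA_id intro: finA_comp_left)

lemma wordS_fix: "\<forall>n>Suc (sum_list ws). wordS ws n = n"
proof (induction ws)
  case Nil then show ?case by (simp add: wordS_def)
next
  case (Cons i ws)
  show ?case
  proof (intro allI impI)
    fix n assume n: "n > Suc (sum_list (i # ws))"
    then have "wordS ws n = n" using Cons by simp
    moreover have "sA i n = n" using n unfolding sA_def by auto
    ultimately show "wordS (i # ws) n = n" by (simp add: wordS_def)
  qed
qed

lemma HA_letters_bound:
  assumes "\<forall>i\<in>set ws. 1 \<le> i" "a \<in> HA (wordS ws)" "k \<in> set a"
  shows "k < Suc (sum_list ws)"
proof -
  have "\<forall>j\<in>set a. 1 \<le> j" using assms(2) unfolding HA_def by auto
  then have "Jk k (demA a)" using assms(3) Jk_demA by blast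
  then show ?thesis using Jk_bound[OF wordS_finA[OF assms(1)] wordS_fix] assms(2) unfolding HA_def by auto
qed

definition sp :: "(int \<Rightarrow> int) \<Rightarrow> bool" where
  "sp u \<longleftrightarrow> inj u \<and> (\<forall>n. u (-n) = - u n) \<and> (\<exists>K. \<forall>n. K < \<bar>n\<bar> \<longrightarrow> u n = n)"

declare gen_gen[simp]

lemma inj_gen: "-1 \<le> j \<Longrightarrow> inj (gen j)"
  by (metis gen_gen injI)

lemma sp_id: "sp id" unfolding sp_def by auto

lemma sp_comp: assumes "sp u" "-1 \<le> j" shows "sp (u \<circ> gen j)"
proof -
  obtain K where K: "\<forall>n. K < \<bar>n\<bar> \<longrightarrow> u n = n" using assms unfolding sp_def by auto
  have "\<forall>n. max K (\<bar>j\<bar> + 2) < \<bar>n\<bar> \<longrightarrow> (u \<circ> gen j) n = n" using K gen_fix[OF assms(2)] by auto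
  moreover have "inj (u \<circ> gen j)" using assms inj_gen unfolding sp_def by (blast intro: inj_compose)
  moreover have "\<forall>n. (u \<circ> gen j) (-n) = - (u \<circ> gen j) n" using assms gen_odd unfolding sp_def by simp
  ultimately show ?thesis unfolding sp_def by blast
qed

lemma sp_0: "sp u \<Longrightarrow> u 0 = 0"
  unfolding sp_def by (metis add.inverse_neutral neg_equal_zero)

lemma sp_maps: assumes "sp u" "\<forall>n. K < \<bar>n\<bar> \<longrightarrow> u n = n" "\<bar>n\<bar> \<le> K" shows "\<bar>u n\<bar> \<le> K"
proof (rule ccontr)
  assume "\<not> \<bar>u n\<bar> \<le> K"
  then have "u (u n) = u n" using assms(2) by auto
  then have "u n = n" using assms(1) unfolding sp_def by (meson injD)
  then show False using \<open>\<not> \<bar>u n\<bar> \<le> K\<close> assms(3) by simp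
qed

lemma finite_InvZ: assumes "sp u" shows "finite (Inv UNIV u)"
proof -
  obtain K where K: "\<forall>n. K < \<bar>n\<bar> \<longrightarrow> u n = n" using assms unfolding sp_def by auto
  have "Inv UNIV u \<subseteq> {-K..K} \<times> {-K..K}"
  proof
    fix p assume p: "p \<in> Inv UNIV u"
    obtain i j where ij: "p = (i,j)" "i < j" "u j < u i" using p unfolding Inv_def by auto
    have bi: "\<bar>u m\<bar> \<le> K" if "\<bar>m\<bar> \<le> K" for m using sp_maps[OF assms K that] .
    have "\<bar>j\<bar> \<le> K"
    proof (rule ccontr)
      assume a: "\<not> \<bar>j\<bar> \<le> K"
      then have uj: "u j = j" using K by auto
      show False
      proof (cases "\<bar>i\<bar> \<le> K")
        case True then have "\<bar>u i\<bar> \<le> K" using bi by auto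
        then show False using ij uj a True by (simp add: abs_if split: if_splits)
      next
        case False then show False using K ij uj by auto
      qed
    qed
    moreover have "\<bar>i\<bar> \<le> K"
    proof (rule ccontr)
      assume a: "\<not> \<bar>i\<bar> \<le> K"
      then have ui: "u i = i" using K by auto
      show False
      proof (cases "\<bar>j\<bar> \<le> K")
        case True then have "\<bar>u j\<bar> \<le> K" using bi by auto
        then show False using ij ui a True by (simp add: abs_if split: if_splits)
      next
        case False then show False using K ij ui by auto
      qed
    qed
    ultimately show "p \<in> {-K..K} \<times> {-K..K}" using ij by auto
  qed
  then show ?thesis by (rule finite_subset) auto
qed

lemma invZ_Inv: "invZ u = card (Inv UNIV u)"
  unfolding invZ_def Inv_def by (rule arg_cong[where f=card]) auto

lemma gen_inv: "-1 \<le> j \<Longrightarrow> i \<in> UNIV \<Longrightarrow> gen j i \<in> UNIV \<and> gen j (gen j i) = i"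
  by simp

lemma invZ_comp:
  assumes "sp u" "-1 \<le> j"
  shows "invZ (u \<circ> gen j) + card (Inv UNIV u \<inter> Inv UNIV (gen j)) = invZ u + card (Inv UNIV (gen j) - Inv UNIV u)"
proof -
  have "sp (id \<circ> gen j)" by (rule sp_comp[OF sp_id assms(2)])
  then have "finite (Inv UNIV (gen j))" using finite_InvZ by simp
  moreover have "inj_on u UNIV" using assms unfolding sp_def by simp
  ultimately show ?thesis unfolding invZ_Inv
    using Inv_comp_card[OF gen_inv[OF assms(2)], of u] finite_InvZ[OF assms(1)] by blast
qed

definition lift :: "(nat \<Rightarrow> nat) \<Rightarrow> int \<Rightarrow> int" where
  "lift \<sigma> n = (if 0 \<le> n then int (\<sigma> (nat n)) else - int (\<sigma> (nat (- n))))"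

lemma lift_comp_sA:
  assumes "finA u" "1 \<le> k" shows "lift (u \<circ> sA k) = lift u \<circ> gen (int k)"
proof
  fix n :: int
  have k: "1 \<le> int k" using assms by simp
  show "lift (u \<circ> sA k) n = (lift u \<circ> gen (int k)) n"
  proof (cases "0 \<le> n")
    case True
    have "gen (int k) n = int (sA k (nat n))" using True assms(2) unfolding gen_pos[OF k] sA_def
      by auto
    moreover have "0 \<le> gen (int k) n" using calculation by simp
    ultimately show ?thesis using True unfolding lift_def by simp
  next
    case False
    have "gen (int k) (-n) = int (sA k (nat (-n)))" using False assms(2) unfolding gen_pos[OF k] sA_def
      by auto
    then have "gen (int k) n = - int (sA k (nat (-n)))" using gen_odd[of "int k" "-n"] k by simp
    moreover have "gen (int k) n < 0"
    proof -
      have "0 < sA k (nat (-n))" using sA_pos[OF assms(2)] False by simp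
      then show ?thesis using calculation by simp
    qed
    ultimately show ?thesis using False unfolding lift_def by simp
  qed
qed

lemma gen_lift:
  assumes "finA u" "1 \<le> k" shows "gen (int k) \<circ> lift u = lift (sA k \<circ> u)"
proof
  fix n :: int
  have k: "1 \<le> int k" using assms by simp
  have g: "gen (int k) (int m) = int (sA k m)" for m using assms(2) unfolding gen_pos[OF k] sA_def
    by auto
  show "(gen (int k) \<circ> lift u) n = lift (sA k \<circ> u) n"
  proof (cases "0 \<le> n")
    case True then show ?thesis unfolding lift_def by (simp add: g)
  next
    case False then show ?thesis unfolding lift_def using gen_odd[of "int k"] k by (simp add: g)
  qed
qed

lemma lift_id: "lift id = id"
  unfolding lift_def by auto

lemma wordT_lift: "\<forall>i\<in>set ws. 1 \<le> i \<Longrightarrow> wordT ws = lift (wordS ws)"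
proof (induction ws)
  case Nil then show ?case using lift_id by (simp add: wordT_def wordS_def id_def)
next
  case (Cons i ws)
  have "wordT (i # ws) = gen (int i) \<circ> wordT ws" by (simp add: wordT_def)
  also have "\<dots> = gen (int i) \<circ> lift (wordS ws)" using Cons by simp
  also have "\<dots> = lift (sA i \<circ> wordS ws)" using gen_lift[OF wordS_finA] Cons by simp
  also have "\<dots> = lift (wordS (i # ws))" by (simp add: wordS_def)
  finally show ?case .
qed

lemma lift_pos: "finA \<sigma> \<Longrightarrow> 0 < n \<Longrightarrow> 0 < lift \<sigma> n"
  unfolding lift_def using finA_pos[of \<sigma> "nat n"] by auto

lemma lift_nat: "lift \<sigma> (int n) = int (\<sigma> n)"
  unfolding lift_def by simp

lemma lift_inj_eq: assumes "lift \<sigma> = lift \<tau>" shows "\<sigma> = \<tau>"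
proof
  fix n show "\<sigma> n = \<tau> n" using fun_cong[OF assms, of "int n"] by (simp add: lift_nat)
qed

lemma ell0_lift: "finA \<sigma> \<Longrightarrow> ell0 (lift \<sigma>) = 0"
proof -
  assume f: "finA \<sigma>"
  have "{i. 0 < i \<and> lift \<sigma> i < 0} = {}" using lift_pos[OF f] by force
  then show ?thesis unfolding ell0_def by (metis card.empty)
qed

lemma Inv_lift:
  assumes f: "finA \<sigma>"
  shows "Inv UNIV (lift \<sigma>) = (\<lambda>(i,j). (int i, int j)) ` Inv {0<..} \<sigma> \<union> (\<lambda>(i,j). (- int j, - int i)) ` Inv {0<..} \<sigma>"
proof (intro equalityI subsetI)
  fix p assume p: "p \<in> Inv UNIV (lift \<sigma>)"
  obtain i j where ij: "p = (i,j)" "i < j" "lift \<sigma> j < lift \<sigma> i" using p unfolding Inv_def by auto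
  have s0: "\<sigma> 0 = 0" using f unfolding finA_def by simp
  consider "0 < i" | "j < 0" | "i \<le> 0" "0 \<le> j" by linarith
  then show "p \<in> (\<lambda>(i,j). (int i, int j)) ` Inv {0<..} \<sigma> \<union> (\<lambda>(i,j). (- int j, - int i)) ` Inv {0<..} \<sigma>"
  proof cases
    case 1
    then have "(nat i, nat j) \<in> Inv {0<..} \<sigma>" using ij unfolding Inv_def lift_def by auto
    moreover have "p = (\<lambda>(i,j). (int i, int j)) (nat i, nat j)" using ij 1 by simp
    ultimately show ?thesis by blast
  next
    case 2
    then have "(nat (-j), nat (-i)) \<in> Inv {0<..} \<sigma>" using ij unfolding Inv_def lift_def by auto
    moreover have "p = (\<lambda>(i,j). (- int j, - int i)) (nat (-j), nat (-i))" using ij 2 by simp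
    ultimately show ?thesis by blast
  next
    case 3
    have "lift \<sigma> i \<le> 0"
      using 3 s0 unfolding lift_def by auto
    moreover have "0 \<le> lift \<sigma> j" using 3 unfolding lift_def by auto
    ultimately show ?thesis using ij by simp
  qed
next
  fix p assume "p \<in> (\<lambda>(i,j). (int i, int j)) ` Inv {0<..} \<sigma> \<union> (\<lambda>(i,j). (- int j, - int i)) ` Inv {0<..} \<sigma>"
  then show "p \<in> Inv UNIV (lift \<sigma>)" unfolding Inv_def lift_def by auto
qed

lemma invZ_lift: assumes f: "finA \<sigma>" shows "invZ (lift \<sigma>) = 2 * lenA \<sigma>"
proof -
  let ?A = "Inv {0<..} \<sigma>"
  let ?f = "(\<lambda>(i::nat, j::nat). (int i, int j))"
  let ?g = "(\<lambda>(i::nat, j::nat). (- int j, - int i))"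
  have fin: "finite ?A" using finite_InvA[OF f] .
  have i1: "inj_on ?f ?A" by (auto simp: inj_on_def)
  have i2: "inj_on ?g ?A" by (auto simp: inj_on_def)
  have d: "?f ` ?A \<inter> ?g ` ?A = {}" unfolding Inv_def by auto
  have "invZ (lift \<sigma>) = card (?f ` ?A \<union> ?g ` ?A)" unfolding invZ_Inv Inv_lift[OF f] ..
  also have "\<dots> = card (?f ` ?A) + card (?g ` ?A)" using fin d by (simp add: card_Un_disjoint)
  also have "\<dots> = 2 * card ?A" using card_image[OF i1] card_image[OF i2] by simp
  finally show ?thesis unfolding lenA_Inv .
qed

lemma lenX_lift: "finA \<sigma> \<Longrightarrow> lenX X (lift \<sigma>) = lenA \<sigma>"
  unfolding lenX_def using invZ_lift ell0_lift by simp

lemma demX_lift_foldl: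
  assumes "finA u" "\<forall>k\<in>set a. 1 \<le> k"
  shows "foldl (demX_step X) (lift u) (map int a) = lift (foldl demA_step u a)"
  using assms
proof (induction a arbitrary: u)
  case Nil then show ?case by simp
next
  case (Cons k a)
  have k: "1 \<le> k" using Cons by simp
  have "demX_step X (lift u) (int k) = lift (demA_step u k)"
    unfolding demX_step_def demA_step_def Let_def
    using lift_comp_sA[OF Cons(2) k] lenX_lift[OF Cons(2)] lenX_lift[OF finA_comp[OF Cons(2) k]]
    by (simp del: lenX_def)
  moreover have "finA (demA_step u k)" using demA_step_finA Cons(2) k by simp
  ultimately show ?case using Cons by simp
qed

lemma demX_lift: "\<forall>k\<in>set a. 1 \<le> k \<Longrightarrow> demX X (map int a) = lift (demA a)"
  unfolding demX_def demA_def using demX_lift_foldl[OF finA_id] lift_id by metis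

lemma finite_ell0: assumes "sp u" shows "finite {i. 0 < i \<and> u i < 0}"
proof -
  obtain K where K: "\<forall>n. K < \<bar>n\<bar> \<longrightarrow> u n = n" using assms unfolding sp_def by auto
  have "{i. 0 < i \<and> u i < 0} \<subseteq> {0..K}"
  proof
    fix i assume i: "i \<in> {i. 0 < i \<and> u i < 0}"
    have "i \<le> K"
    proof (rule ccontr)
      assume "\<not> i \<le> K" then have "u i = i" using K i by auto
      then show False using i by auto
    qed
    then show "i \<in> {0..K}" using i by auto
  qed
  then show ?thesis using finite_subset by blast
qed

lemma sp_odd: "sp u \<Longrightarrow> u (-n) = - u n" unfolding sp_def by auto

lemma sp_inj_eq: "sp u \<Longrightarrow> u m = u n \<longleftrightarrow> m = n" unfolding sp_def by (auto dest: injD)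

lemma invZ_ge_ell0: assumes "sp u" shows "ell0 u \<le> invZ u"
proof -
  have "(\<lambda>i. (-i, i)) ` {i. 0 < i \<and> u i < 0} \<subseteq> Inv UNIV u"
    unfolding Inv_def using sp_odd[OF assms] by auto
  moreover have "inj_on (\<lambda>i::int. (-i, i)) {i. 0 < i \<and> u i < 0}" by (auto simp: inj_on_def)
  ultimately show ?thesis unfolding ell0_def invZ_Inv
    by (metis card_image card_mono finite_InvZ[OF assms])
qed

lemma div2_lt: assumes "0 \<le> (x::int)" "x + 2 \<le> y" shows "nat (x div 2) < nat (y div 2)"
proof -
  have "(x+2) div 2 \<le> y div 2" by (rule zdiv_mono1) (use assms in auto)
  moreover have "(x+2) div 2 = x div 2 + 1" by simp
  moreover have "0 \<le> x div 2" using assms by simp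
  ultimately show ?thesis by simp
qed

lemma lenD_lt: "ell0 u \<le> invZ u \<Longrightarrow> int (invZ u) - int (ell0 u) + 2 \<le> int (invZ v) - int (ell0 v)
   \<Longrightarrow> lenX D u < lenX D v"
  unfolding lenX_def using div2_lt[of "int (invZ u) - int (ell0 u)" "int (invZ v) - int (ell0 v)"] by simp

lemma lenB_lt: "X \<noteq> D \<Longrightarrow> int (invZ u) + int (ell0 u) + 2 \<le> int (invZ v) + int (ell0 v)
   \<Longrightarrow> lenX X u < lenX X v"
  unfolding lenX_def using div2_lt[of "int (invZ u) + int (ell0 u)" "int (invZ v) + int (ell0 v)"] by simp

lemma asc_0:
  assumes "sp u" "0 < u 1" "X \<noteq> D"
  shows "lenX X u < lenX X (u \<circ> gen 0)"
proof -
  have u0: "u 0 = 0" using sp_0[OF assms(1)] .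
  have um: "u (-1) = - u 1" using sp_odd[OF assms(1)] by simp
  have "Inv UNIV u \<inter> Inv UNIV (gen 0) = {}" unfolding Inv_gen_0 unfolding Inv_def using u0 um assms(2) by auto
  moreover then have "Inv UNIV (gen 0) - Inv UNIV u = Inv UNIV (gen 0)" by blast
  ultimately have "invZ (u \<circ> gen 0) = invZ u + card (Inv UNIV (gen 0))" using invZ_comp[OF assms(1), of 0]
    by simp
  then have "invZ (u \<circ> gen 0) = invZ u + 3" by (simp add: Inv_gen_0)
  moreover have "ell0 u \<le> ell0 (u \<circ> gen 0)"
  proof -
    have "{i. 0 < i \<and> u i < 0} \<subseteq> {i. 0 < i \<and> (u \<circ> gen 0) i < 0}"
      using assms(2) unfolding gen_0 by auto
    moreover have "finite {i. 0 < i \<and> (u \<circ> gen 0) i < 0}" using finite_ell0[OF sp_comp[OF assms(1), of 0]] by simp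
    ultimately show ?thesis unfolding ell0_def by (rule card_mono[rotated])
  qed
  ultimately show ?thesis using assms(3) by (intro lenB_lt) auto
qed

lemma ell0_comp_pos:
  assumes "sp u" "1 \<le> j" shows "ell0 (u \<circ> gen j) = ell0 u"
proof -
  have j: "-1 \<le> j" using assms by simp
  have "{i. 0 < i \<and> (u \<circ> gen j) i < 0} = gen j ` {i. 0 < i \<and> u i < 0}"
  proof (intro equalityI subsetI)
    fix i assume "i \<in> {i. 0 < i \<and> (u \<circ> gen j) i < 0}"
    moreover have "0 < gen j i" if "0 < i" using that assms(2) unfolding gen_pos[OF assms(2)] by auto
    ultimately show "i \<in> gen j ` {i. 0 < i \<and> u i < 0}"
      by (metis (mono_tags, lifting) comp_apply gen_gen image_eqI j mem_Collect_eq)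
  next
    fix i assume "i \<in> gen j ` {i. 0 < i \<and> u i < 0}"
    then obtain k where "i = gen j k" "0 < k" "u k < 0" by auto
    moreover have "0 < gen j k" using \<open>0 < k\<close> assms(2) unfolding gen_pos[OF assms(2)] by auto
    ultimately show "i \<in> {i. 0 < i \<and> (u \<circ> gen j) i < 0}" using j by simp
  qed
  then show ?thesis unfolding ell0_def using card_image inj_gen[OF j] by (metis inj_on_subset subset_UNIV)
qed

lemma asc_1D:
  assumes "sp u" "u 1 < u 2"
  shows "lenX D u < lenX D (u \<circ> gen 1)"
proof -
  have um: "u (-1) = - u 1" "u (-2) = - u 2" using sp_odd[OF assms(1)] by auto
  have "Inv UNIV u \<inter> Inv UNIV (gen 1) = {}" unfolding Inv_gen_pos[of 1, simplified] unfolding Inv_def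
    using um assms(2) by auto
  moreover then have "Inv UNIV (gen 1) - Inv UNIV u = Inv UNIV (gen 1)" by blast
  ultimately have "invZ (u \<circ> gen 1) = invZ u + card (Inv UNIV (gen 1))" using invZ_comp[OF assms(1), of 1]
    by simp
  then have "invZ (u \<circ> gen 1) = invZ u + 2" by (simp add: Inv_gen_pos[of 1, simplified])
  moreover have "ell0 (u \<circ> gen 1) = ell0 u" using ell0_comp_pos[OF assms(1)] by simp
  moreover have "ell0 u \<le> invZ u" using invZ_ge_ell0[OF assms(1)] .
  ultimately show ?thesis by (intro lenD_lt) auto
qed

lemma ell0_split:
  assumes "finite {i. 2 < i \<and> v i < 0}"
  shows "ell0 v = card {i. 2 < i \<and> v i < 0} + (if v 1 < 0 then 1 else 0) + (if v 2 < 0 then 1 else 0)"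
proof -
  have e: "{i. 0 < i \<and> v i < 0} = {i. 2 < i \<and> v i < 0} \<union> ({1,2} \<inter> {i. v i < 0})" by auto
  have "card ({1,2} \<inter> {i. v i < 0}) = (if v 1 < 0 then 1 else 0) + (if v 2 < 0 then 1 else 0)"
    by (auto simp: Int_insert_left)
  moreover have "card ({i. 2 < i \<and> v i < 0} \<union> ({1,2} \<inter> {i. v i < 0})) =
     card {i. 2 < i \<and> v i < 0} + card ({1,2} \<inter> {i. v i < 0})"
    by (rule card_Un_disjoint) (use assms in auto)
  ultimately show ?thesis unfolding ell0_def e by simp
qed

lemma asc_m1D:
  assumes "sp u" "0 < u 1 + u 2"
  shows "lenX D u < lenX D (u \<circ> gen (-1))"
proof -
  have u0: "u 0 = 0" using sp_0[OF assms(1)] .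
  have um: "u (-1) = - u 1" "u (-2) = - u 2" using sp_odd[OF assms(1)] by auto
  have n1: "u 1 \<noteq> 0" using sp_inj_eq[OF assms(1), of 1 0] u0 by simp
  have n2: "u 2 \<noteq> 0" using sp_inj_eq[OF assms(1), of 2 0] u0 by simp
  let ?F = "Inv UNIV (gen (-1))"
  have e: "invZ (u \<circ> gen (-1)) + card (Inv UNIV u \<inter> ?F) = invZ u + card (?F - Inv UNIV u)"
    using invZ_comp[OF assms(1), of "-1"] by simp
  let ?R = "{i. 2 < i \<and> u i < 0}"
  have fR: "finite ?R" using finite_ell0[OF assms(1)] by (rule finite_subset[rotated]) auto
  have R': "{i. 2 < i \<and> (u \<circ> gen (-1)) i < 0} = ?R" unfolding gen_m1 by auto
  have l1: "ell0 u = card ?R + (if u 1 < 0 then 1 else 0) + (if u 2 < 0 then 1 else 0)"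
    using ell0_split[OF fR] .
  have l2: "ell0 (u \<circ> gen (-1)) = card ?R + (if u 2 > 0 then 1 else 0) + (if u 1 > 0 then 1 else 0)"
    using ell0_split[of "u \<circ> gen (-1)"] fR R' um unfolding gen_m1 by simp
  have ge: "ell0 u \<le> invZ u" using invZ_ge_ell0[OF assms(1)] .
  consider "0 < u 1" "0 < u 2" | "u 1 < 0" | "u 2 < 0" using n1 n2 by linarith
  then show ?thesis
  proof cases
    case 1
    have "Inv UNIV u \<inter> ?F = {}" unfolding Inv_gen_m1 unfolding Inv_def using u0 um 1 by auto
    moreover then have "?F - Inv UNIV u = ?F" by blast
    moreover have "card ?F = 8" unfolding Inv_gen_m1 by simp
    ultimately have "invZ (u \<circ> gen (-1)) = invZ u + 8" using e by simp
    then show ?thesis using l1 l2 1 ge by (intro lenD_lt) auto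
  next
    case 2
    then have p2: "0 < u 2" using assms(2) by simp
    have "Inv UNIV u \<inter> ?F = {(-1,0),(-1,1),(0,1)}" unfolding Inv_gen_m1 unfolding Inv_def using u0 um 2 p2 assms(2) by auto
    moreover have "?F - Inv UNIV u = {(-2,0),(-2,1),(-2,2),(-1,2),(0,2)}"
      unfolding Inv_gen_m1 unfolding Inv_def using u0 um 2 p2 assms(2) by auto
    ultimately have "invZ (u \<circ> gen (-1)) = invZ u + 2" using e by simp
    then show ?thesis using l1 l2 2 p2 ge by (intro lenD_lt) auto
  next
    case 3
    then have p1: "0 < u 1" using assms(2) by simp
    have "Inv UNIV u \<inter> ?F = {(-2,0),(-2,2),(0,2)}" unfolding Inv_gen_m1 unfolding Inv_def using u0 um 3 p1 assms(2) by auto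
    moreover have "?F - Inv UNIV u = {(-2,1),(-1,0),(-1,1),(-1,2),(0,1)}"
      unfolding Inv_gen_m1 unfolding Inv_def using u0 um 3 p1 assms(2) by auto
    ultimately have "invZ (u \<circ> gen (-1)) = invZ u + 2" using e by simp
    then show ?thesis using l1 l2 3 p1 ge by (intro lenD_lt) auto
  qed
qed

lemma demX_step_eq: "demX_step X u j = (if lenX X u < lenX X (u \<circ> gen j) then u \<circ> gen j else u)"
  unfolding demX_step_def Let_def by simp

lemma sp_step: "sp u \<Longrightarrow> -1 \<le> j \<Longrightarrow> sp (demX_step X u j)"
  unfolding demX_step_eq using sp_comp by auto

definition Qn :: "(int \<Rightarrow> int) \<Rightarrow> bool" where "Qn u \<longleftrightarrow> (\<exists>i>0. u i < 0)"

lemma gen_pos_pos: "1 \<le> j \<Longrightarrow> 0 < i \<Longrightarrow> 0 < gen j i"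
  unfolding gen_pos by auto

lemma Qn_comp: assumes "Qn u" "1 \<le> j" shows "Qn (u \<circ> gen j)"
proof -
  obtain i where i: "0 < i" "u i < 0" using assms unfolding Qn_def by auto
  have "0 < gen j i" using gen_pos_pos[OF assms(2) i(1)] .
  moreover have "(u \<circ> gen j) (gen j i) = u i" using assms(2) by simp
  ultimately show ?thesis using i unfolding Qn_def by (intro exI[of _ "gen j i"]) simp
qed

lemma Qn_step: "Qn u \<Longrightarrow> 1 \<le> j \<Longrightarrow> Qn (demX_step X u j)"
  unfolding demX_step_eq using Qn_comp by auto

lemma notQn_pos: assumes "sp u" "\<not> Qn u" "0 < i" shows "0 < u i"
proof -
  have "u i \<noteq> 0" using sp_inj_eq[OF assms(1), of i 0] sp_0[OF assms(1)] assms(3) by simp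
  then show ?thesis using assms(2,3) unfolding Qn_def by force
qed

lemma Qn_after0: assumes "sp u" "X \<noteq> D" shows "Qn (demX_step X u 0)"
proof -
  have um: "u (-1) = - u 1" using sp_odd[OF assms(1)] by simp
  have n1: "u 1 \<noteq> 0" using sp_inj_eq[OF assms(1), of 1 0] sp_0[OF assms(1)] by simp
  show ?thesis
  proof (cases "0 < u 1")
    case True
    then have "demX_step X u 0 = u \<circ> gen 0" unfolding demX_step_eq using asc_0[OF assms(1) True assms(2)] by simp
    moreover have "(u \<circ> gen 0) 1 < 0" using True um by (simp add: gen_0)
    ultimately show ?thesis unfolding Qn_def by (intro exI[of _ 1]) simp
  next
    case False
    then have neg: "u 1 < 0" using n1 by simp
    let ?v = "u \<circ> gen 0"
    have v: "sp ?v" using sp_comp[OF assms(1)] by simp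
    have "0 < ?v 1" using neg um by (simp add: gen_0)
    then have "lenX X ?v < lenX X (?v \<circ> gen 0)" using asc_0[OF v _ assms(2)] by simp
    moreover have "?v \<circ> gen 0 = u" by (simp add: fun_eq_iff)
    ultimately have "demX_step X u 0 = u" unfolding demX_step_eq by simp
    then show ?thesis using neg unfolding Qn_def by (intro exI[of _ 1]) simp
  qed
qed

definition In :: "(int \<Rightarrow> int) \<Rightarrow> bool" where "In u \<longleftrightarrow> Qn u \<or> 1 < u 1"

lemma In_after1: assumes "sp u" shows "In (demX_step D u 1)"
proof (cases "Qn u")
  case True then show ?thesis using Qn_step unfolding In_def by simp
next
  case False
  have p1: "0 < u 1" and p2: "0 < u 2" using notQn_pos[OF assms False] by auto
  have ne: "u 1 \<noteq> u 2" using sp_inj_eq[OF assms(1), of 1 2] by simp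
  show ?thesis
  proof (cases "u 1 < u 2")
    case True
    then have "demX_step D u 1 = u \<circ> gen 1" unfolding demX_step_eq using asc_1D[OF assms True] by simp
    moreover have "(u \<circ> gen 1) 1 = u 2" by (simp add: gen_pos)
    ultimately show ?thesis using True p1 unfolding In_def by simp
  next
    case False
    let ?v = "u \<circ> gen 1"
    have v: "sp ?v" using sp_comp[OF assms(1)] by simp
    have "?v 1 < ?v 2" using False ne by (simp add: gen_pos)
    then have "lenX D ?v < lenX D (?v \<circ> gen 1)" using asc_1D[OF v] by simp
    moreover have "?v \<circ> gen 1 = u" by (simp add: fun_eq_iff)
    ultimately have "demX_step D u 1 = u" unfolding demX_step_eq by simp
    then show ?thesis using False ne p2 unfolding In_def by simp
  qed
qed

lemma In_afterm1: assumes "sp u" shows "In (demX_step D u (-1))"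
proof -
  have um: "u (-1) = - u 1" "u (-2) = - u 2" using sp_odd[OF assms(1)] by auto
  have ne: "u 1 + u 2 \<noteq> 0"
  proof
    assume "u 1 + u 2 = 0" then have "u 1 = u (-2)" using um by simp
    then show False using sp_inj_eq[OF assms(1), of 1 "-2"] by simp
  qed
  let ?v = "u \<circ> gen (-1)"
  have v1: "?v 1 = - u 2" and v2: "?v 2 = - u 1" using um by (auto simp: gen_m1)
  show ?thesis
  proof (cases "0 < u 1 + u 2")
    case True
    have "demX_step D u (-1) = ?v" unfolding demX_step_eq using asc_m1D[OF assms True] by simp
    moreover have "Qn ?v"
    proof (cases "0 < u 2")
      case True then show ?thesis using v1 unfolding Qn_def by (intro exI[of _ 1]) simp
    next
      case False then have "0 < u 1" using \<open>0 < u 1 + u 2\<close> by simp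
      then show ?thesis using v2 unfolding Qn_def by (intro exI[of _ 2]) simp
    qed
    ultimately show ?thesis unfolding In_def by simp
  next
    case False
    have v: "sp ?v" using sp_comp[OF assms(1)] by simp
    have "0 < ?v 1 + ?v 2" using False ne v1 v2 by simp
    then have "lenX D ?v < lenX D (?v \<circ> gen (-1))" using asc_m1D[OF v] by simp
    moreover have "?v \<circ> gen (-1) = u" by (simp add: fun_eq_iff)
    ultimately have "demX_step D u (-1) = u" unfolding demX_step_eq by simp
    moreover have "Qn u"
    proof (cases "u 1 < 0")
      case True then show ?thesis unfolding Qn_def by (intro exI[of _ 1]) simp
    next
      case False then have "u 2 < 0" using \<open>\<not> 0 < u 1 + u 2\<close> ne by simp
      then show ?thesis unfolding Qn_def by (intro exI[of _ 2]) simp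
    qed
    ultimately show ?thesis unfolding In_def by simp
  qed
qed

lemma In_pres: assumes "sp u" "In u" "2 \<le> j" shows "In (demX_step D u j)"
proof -
  have "(u \<circ> gen j) 1 = u 1" using assms(3) by (simp add: gen_pos)
  then show ?thesis using assms Qn_comp unfolding demX_step_eq In_def by auto
qed

lemma Qn_foldl:
  assumes "sp u" "X \<noteq> D" "\<forall>j\<in>set a. 0 \<le> j" "0 \<in> set a \<or> Qn u"
  shows "Qn (foldl (demX_step X) u a)"
  using assms
proof (induction a arbitrary: u)
  case Nil then show ?case by simp
next
  case (Cons j a)
  have s: "sp (demX_step X u j)" using sp_step Cons by simp
  have "0 \<in> set a \<or> Qn (demX_step X u j)"
  proof (cases "j = 0")
    case True then show ?thesis using Qn_after0[OF Cons(2,3)] by simp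
  next
    case False
    then have "0 \<in> set a \<or> Qn u" "1 \<le> j" using Cons by auto
    then show ?thesis using Qn_step by blast
  qed
  then show ?case using Cons s by simp
qed

lemma In_foldl:
  assumes "sp u" "\<forall>j\<in>set a. letterX D j" "-1 \<in> set a \<or> 1 \<in> set a \<or> In u"
  shows "In (foldl (demX_step D) u a)"
  using assms
proof (induction a arbitrary: u)
  case Nil then show ?case by simp
next
  case (Cons j a)
  have jl: "j = -1 \<or> 1 \<le> j" using Cons(3) unfolding letterX_def by simp
  have s: "sp (demX_step D u j)" using sp_step Cons jl by auto
  have "-1 \<in> set a \<or> 1 \<in> set a \<or> In (demX_step D u j)"
  proof (cases "j = -1 \<or> j = 1")
    case True then show ?thesis using In_after1[OF Cons(2)] In_afterm1[OF Cons(2)] by auto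
  next
    case False
    then have "-1 \<in> set a \<or> 1 \<in> set a \<or> In u" "2 \<le> j" using Cons jl by auto
    then show ?thesis using In_pres[OF Cons(2)] by blast
  qed
  then show ?case using Cons s by simp
qed

lemma HX_letters:
  assumes ws: "\<forall>i\<in>set ws. 1 \<le> i" and d: "X = D \<Longrightarrow> wordT ws 1 = 1"
    and a: "a \<in> HX X (wordT ws)"
  shows "\<forall>j\<in>set a. 1 \<le> j \<and> (X = D \<longrightarrow> 2 \<le> j)"
proof -
  have wl: "wordT ws = lift (wordS ws)" using wordT_lift[OF ws] .
  have f: "finA (wordS ws)" using wordS_finA[OF ws] .
  have nQ: "\<not> Qn (wordT ws)" unfolding wl Qn_def by (force dest: lift_pos[OF f])
  have dem: "foldl (demX_step X) id a = wordT ws" using a unfolding HX_def demX_def by simp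
  have let_: "\<forall>j\<in>set a. letterX X j" using a unfolding HX_def by simp
  show ?thesis
  proof (cases "X = D")
    case True
    have nI: "\<not> In (wordT ws)" using nQ d True unfolding In_def by simp
    have "\<not> (-1 \<in> set a \<or> 1 \<in> set a)"
    proof
      assume h: "-1 \<in> set a \<or> 1 \<in> set a"
      have "\<forall>j\<in>set a. letterX D j" using let_ True by simp
      then have "In (foldl (demX_step D) id a)" using In_foldl[OF sp_id, of a] h by blast
      then show False using nI dem True by simp
    qed
    then have h: "j \<noteq> -1" "j \<noteq> 1" if "j \<in> set a" for j using that by auto
    have h2: "j = -1 \<or> 1 \<le> j" if "j \<in> set a" for j using let_ True that unfolding letterX_def by auto
    show ?thesis
    proof
      fix j assume "j \<in> set a"
      then show "1 \<le> j \<and> (X = D \<longrightarrow> 2 \<le> j)" using h[of j] h2[of j] by auto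
    qed
  next
    case False
    have "0 \<notin> set a"
    proof
      assume "0 \<in> set a"
      then have "Qn (foldl (demX_step X) id a)" using Qn_foldl[OF sp_id False] let_ False
        unfolding letterX_def by simp
      then show False using nQ dem by simp
    qed
    show ?thesis
    proof
      fix j assume j: "j \<in> set a"
      then have "0 \<le> j" using let_ False unfolding letterX_def by auto
      moreover have "j \<noteq> 0" using j \<open>0 \<notin> set a\<close> by auto
      ultimately show "1 \<le> j \<and> (X = D \<longrightarrow> 2 \<le> j)" using False by auto
    qed
  qed
qed

lemma HX_eq:
  assumes ws: "\<forall>i\<in>set ws. 1 \<le> i" and d: "X = D \<Longrightarrow> wordT ws 1 = 1"
  shows "HX X (wordT ws) = (map int) ` HA (wordS ws)"
proof (intro equalityI subsetI)
  fix a assume a: "a \<in> HX X (wordT ws)"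
  have l: "\<forall>j\<in>set a. 1 \<le> j" using HX_letters[OF ws d a] by simp
  define b where "b = map nat a"
  have ab: "a = map int b" unfolding b_def using l by (induction a) auto
  have lb: "\<forall>k\<in>set b. 1 \<le> k" using l unfolding b_def by auto
  have "lift (demA b) = wordT ws" using a demX_lift[OF lb, of X] unfolding HX_def ab by simp
  then have "lift (demA b) = lift (wordS ws)" using wordT_lift[OF ws] by simp
  then have "demA b = wordS ws" by (rule lift_inj_eq)
  then have "b \<in> HA (wordS ws)" using lb unfolding HA_def by simp
  then show "a \<in> (map int) ` HA (wordS ws)" using ab by simp
next
  fix a assume "a \<in> (map int) ` HA (wordS ws)"
  then obtain b where b: "a = map int b" "b \<in> HA (wordS ws)" by auto
  have lb: "\<forall>k\<in>set b. 1 \<le> k" and db: "demA b = wordS ws" using b unfolding HA_def by auto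
  have "demX X a = wordT ws" using demX_lift[OF lb, of X] db wordT_lift[OF ws] b by simp
  moreover have "\<forall>j\<in>set a. letterX X j" using lb b unfolding letterX_def by auto
  ultimately show "a \<in> HX X (wordT ws)" unfolding HX_def by simp
qed

lemma all_nat_split: "(\<forall>n::nat. P n) \<longleftrightarrow> P 0 \<and> (\<forall>n. P (Suc n))"
  by (metis not0_implies_Suc)

lemma UK_single: "UK [x] [s] \<longleftrightarrow> s \<noteq> 0"
  unfolding UK_def by simp

lemma UK_Nil: "UK [] s \<longleftrightarrow> s = []"
  unfolding UK_def by auto

lemma UK_cons2:
  "UK (x # y # a) (s # t # r) \<longleftrightarrow>
     s \<noteq> 0 \<and> prec_rank s \<le> prec_rank t \<and> (s = t \<and> s < 0 \<longrightarrow> y < x) \<and> (s = t \<and> 0 < s \<longrightarrow> x < y)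
     \<and> UK (y # a) (t # r)"
  unfolding UK_def
  apply (subst (1 2) all_nat_split)
  apply (simp only: sorted2 list.map)
  by auto

lemma CX_single: "CX C [x] [v] \<longleftrightarrow> 1 \<le> v"
  unfolding CX_def by simp

lemma CX_Nil: "CX C [] b \<longleftrightarrow> b = []"
  unfolding CX_def by auto

definition peaks :: "int list \<Rightarrow> nat list \<Rightarrow> bool" where
  "peaks a b \<longleftrightarrow> (\<forall>i. i + 2 < length a \<and> \<bar>a ! i\<bar> \<le> \<bar>a ! (i+1)\<bar> \<and> \<bar>a ! (i+2)\<bar> \<le> \<bar>a ! (i+1)\<bar> \<longrightarrow> b ! i < b ! (i+2))"

lemma peak_shift:
  "(\<forall>i. 0 < i \<and> i + 1 < length a \<and> \<bar>a ! (i - 1)\<bar> \<le> \<bar>a ! i\<bar> \<and> \<bar>a ! (i + 1)\<bar> \<le> \<bar>a ! i\<bar>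
            \<longrightarrow> b ! (i - 1) < b ! (i + 1)) \<longleftrightarrow> peaks a b"
  unfolding peaks_def
proof (intro iffI allI impI)
  fix i assume h: "\<forall>i. 0 < i \<and> i + 1 < length a \<and> \<bar>a ! (i - 1)\<bar> \<le> \<bar>a ! i\<bar> \<and> \<bar>a ! (i + 1)\<bar> \<le> \<bar>a ! i\<bar>
            \<longrightarrow> b ! (i - 1) < b ! (i + 1)"
    and c: "i + 2 < length a \<and> \<bar>a ! i\<bar> \<le> \<bar>a ! (i+1)\<bar> \<and> \<bar>a ! (i+2)\<bar> \<le> \<bar>a ! (i+1)\<bar>"
  show "b ! i < b ! (i+2)" using h[rule_format, of "i+1"] c by (simp add: numeral_2_eq_2)
next
  fix i assume h: "\<forall>i. i + 2 < length a \<and> \<bar>a ! i\<bar> \<le> \<bar>a ! (i+1)\<bar> \<and> \<bar>a ! (i+2)\<bar> \<le> \<bar>a ! (i+1)\<bar> \<longrightarrow> b ! i < b ! (i+2)"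
    and c: "0 < i \<and> i + 1 < length a \<and> \<bar>a ! (i - 1)\<bar> \<le> \<bar>a ! i\<bar> \<and> \<bar>a ! (i + 1)\<bar> \<le> \<bar>a ! i\<bar>"
  then obtain j where j: "i = Suc j" by (metis gr0_implies_Suc)
  show "b ! (i - 1) < b ! (i + 1)" using h[rule_format, of j] c j by (simp add: numeral_2_eq_2)
qed

lemma peaks_cons2:
  assumes "length b = length a"
  shows "peaks (map int (x # y # a)) (v # w # b) \<longleftrightarrow>
     (a \<noteq> [] \<and> x \<le> y \<and> hd a \<le> y \<longrightarrow> v < hd b) \<and> peaks (map int (y # a)) (w # b)"
  unfolding peaks_def
  apply (subst (1) all_nat_split)
  using assms by (cases a; cases b; simp add: numeral_2_eq_2)

lemma CX_cons2:
  assumes "length b = length a"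
  shows "CX C (map int (x # y # a)) (v # w # b) \<longleftrightarrow>
     1 \<le> v \<and> v \<le> w \<and> (a \<noteq> [] \<and> x \<le> y \<and> hd a \<le> y \<longrightarrow> v < hd b) \<and> CX C (map int (y # a)) (w # b)"
proof -
  have peak: "(\<forall>i. 0 < i \<and> i + 1 < length (map int (x # y # a)) \<and>
        \<bar>map int (x # y # a) ! (i - 1)\<bar> \<le> \<bar>map int (x # y # a) ! i\<bar> \<and>
        \<bar>map int (x # y # a) ! (i + 1)\<bar> \<le> \<bar>map int (x # y # a) ! i\<bar> \<longrightarrow>
        (v # w # b) ! (i - 1) < (v # w # b) ! (i + 1))
     \<longleftrightarrow> (a \<noteq> [] \<and> x \<le> y \<and> hd a \<le> y \<longrightarrow> v < hd b) \<and>
       (\<forall>i. 0 < i \<and> i + 1 < length (map int (y # a)) \<and>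
        \<bar>map int (y # a) ! (i - 1)\<bar> \<le> \<bar>map int (y # a) ! i\<bar> \<and>
        \<bar>map int (y # a) ! (i + 1)\<bar> \<le> \<bar>map int (y # a) ! i\<bar> \<longrightarrow>
        (w # b) ! (i - 1) < (w # b) ! (i + 1))"
    unfolding peak_shift using peaks_cons2[OF assms] .
  show ?thesis unfolding CX_def
    apply (simp only: peak)
    using assms by (auto simp: sorted2)
qed

lemma gamma_single: "gamma [x] [v] = 0"
  unfolding gamma_def by simp

lemma gamma_cons2:
  "gamma (x # y # a) (v # w # b) = (if x = y \<and> v = w then 1 else 0) + gamma (y # a) (w # b)"
proof -
  let ?S = "{i. i + 1 < length (x # y # a) \<and> (x # y # a) ! i = (x # y # a) ! (i + 1) \<and> (v # w # b) ! i = (v # w # b) ! (i + 1)}"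
  let ?T = "{i. i + 1 < length (y # a) \<and> (y # a) ! i = (y # a) ! (i + 1) \<and> (w # b) ! i = (w # b) ! (i + 1)}"
  have e: "?S = (if x = y \<and> v = w then {0} else {}) \<union> Suc ` ?T"
  proof (intro equalityI subsetI)
    fix i assume "i \<in> ?S" then show "i \<in> (if x = y \<and> v = w then {0} else {}) \<union> Suc ` ?T"
      by (cases i) auto
  next
    fix i assume "i \<in> (if x = y \<and> v = w then {0} else {}) \<union> Suc ` ?T"
    then show "i \<in> ?S" by (auto split: if_splits)
  qed
  have fT: "finite ?T" by (rule finite_subset[of _ "{..<length (y # a)}"]) auto
  have ci: "card (Suc ` ?T) = card ?T" by (simp add: card_image)
  show ?thesis
  proof (cases "x = y \<and> v = w")
    case True
    have "card ?S = card (insert 0 (Suc ` ?T))" unfolding e using True by simp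
    then have "card ?S = Suc (card (Suc ` ?T))" using fT by (simp add: card_insert_if)
    then show ?thesis using True ci unfolding gamma_def by simp
  next
    case False
    have "card ?S = card (Suc ` ?T)" unfolding e using False by simp
    then show ?thesis using False ci unfolding gamma_def by simp
  qed
qed

lemma card_set_cons2:
  assumes "sorted (v # w # b)"
  shows "card (set (v # w # b)) = card (set (w # b)) + (if v = w then 0 else 1)"
proof -
  have "v = w \<or> v \<notin> set (w # b)" using assms by (auto simp: sorted2)
  then show ?thesis by auto
qed

definition fib :: "nat list \<Rightarrow> nat list \<Rightarrow> int list set" where
  "fib a b = {s. UK a s \<and> map (\<lambda>x. nat \<bar>x\<bar>) s = b}"

definition fibS :: "int \<Rightarrow> nat list \<Rightarrow> nat list \<Rightarrow> int list set" where
  "fibS sg a b = {s \<in> fib a b. hd s = sg * int (hd b)}"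

definition Cc :: "nat \<Rightarrow> nat \<Rightarrow> int \<Rightarrow> int \<Rightarrow> bool" where
  "Cc x y s t \<longleftrightarrow> prec_rank s \<le> prec_rank t \<and> (s = t \<and> s < 0 \<longrightarrow> y < x) \<and> (s = t \<and> 0 < s \<longrightarrow> x < y)"

lemma fib_Nil: "fib [] [] = {[]}" unfolding fib_def UK_def by auto

lemma fib_single: "1 \<le> v \<Longrightarrow> fib [x] [v] = {[int v], [- int v]}"
  unfolding fib_def UK_def by (auto simp: length_Suc_conv)

lemma fib_cons2:
  "fib (x # y # a) (v # w # b) =
     {sg # t | sg t. t \<in> fib (y # a) (w # b) \<and> nat \<bar>sg\<bar> = v \<and> sg \<noteq> 0 \<and> Cc x y sg (hd t)}"
proof (intro equalityI subsetI)
  fix s assume s: "s \<in> fib (x # y # a) (v # w # b)"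
  then have l: "length s = length (x # y # a)" unfolding fib_def UK_def by simp
  then obtain sg tt r where sr: "s = sg # tt # r" by (metis Suc_length_conv)
  show "s \<in> {sg # t | sg t. t \<in> fib (y # a) (w # b) \<and> nat \<bar>sg\<bar> = v \<and> sg \<noteq> 0 \<and> Cc x y sg (hd t)}"
    using s unfolding sr fib_def by (auto simp: UK_cons2 Cc_def)
next
  fix s assume "s \<in> {sg # t | sg t. t \<in> fib (y # a) (w # b) \<and> nat \<bar>sg\<bar> = v \<and> sg \<noteq> 0 \<and> Cc x y sg (hd t)}"
  then obtain sg t where st: "s = sg # t" "t \<in> fib (y # a) (w # b)" "nat \<bar>sg\<bar> = v" "sg \<noteq> 0" "Cc x y sg (hd t)"
    by auto
  have l: "length t = length (y # a)" using st(2) unfolding fib_def UK_def by simp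
  then obtain tt r where tr: "t = tt # r" by (metis Suc_length_conv)
  show "s \<in> fib (x # y # a) (v # w # b)"
    using st unfolding tr fib_def by (auto simp: UK_cons2 Cc_def)
qed

lemma fib_hd: assumes "t \<in> fib (y # a) (w # b)" "1 \<le> w"
  shows "t \<noteq> [] \<and> (hd t = int w \<or> hd t = - int w)"
proof -
  have "length t = length (y # a)" using assms unfolding fib_def UK_def by simp
  then obtain tt r where tr: "t = tt # r" by (metis Suc_length_conv)
  then show ?thesis using assms unfolding fib_def by auto
qed

lemma fib_split:
  assumes "1 \<le> w"
  shows "fib (y # a) (w # b) = fibS 1 (y # a) (w # b) \<union> fibS (-1) (y # a) (w # b)"
    and "fibS 1 (y # a) (w # b) \<inter> fibS (-1) (y # a) (w # b) = {}"
  using fib_hd[OF _ assms] assms unfolding fibS_def by auto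

lemma finite_fib: "finite (fib a b)"
proof -
  have "fib a b \<subseteq> {s. set s \<subseteq> {- int (Max (insert 0 (set b)))..int (Max (insert 0 (set b)))} \<and> length s = length b}"
  proof
    fix s assume s: "s \<in> fib a b"
    then have mb: "map (\<lambda>x. nat \<bar>x\<bar>) s = b" unfolding fib_def by simp
    have "\<bar>z\<bar> \<le> int (Max (insert 0 (set b)))" if "z \<in> set s" for z
    proof -
      have "nat \<bar>z\<bar> \<in> set b" using that mb by force
      then have "nat \<bar>z\<bar> \<le> Max (insert 0 (set b))" by simp
      then show ?thesis by simp
    qed
    then have "set s \<subseteq> {- int (Max (insert 0 (set b)))..int (Max (insert 0 (set b)))}"
      by (meson abs_le_D1 abs_le_D2 atLeastAtMost_iff minus_le_iff subsetI)
    moreover have "length s = length b" using mb by auto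
    ultimately show "s \<in> {s. set s \<subseteq> {- int (Max (insert 0 (set b)))..int (Max (insert 0 (set b)))} \<and> length s = length b}"
      by simp
  qed
  moreover have "finite {s. set s \<subseteq> {- int (Max (insert 0 (set b)))..int (Max (insert 0 (set b)))} \<and> length s = length b}"
    by (rule finite_lists_length_eq) simp
  ultimately show ?thesis using finite_subset by blast
qed

lemma card_fib_split:
  assumes "1 \<le> w"
  shows "card (fib (y # a) (w # b)) = card (fibS 1 (y # a) (w # b)) + card (fibS (-1) (y # a) (w # b))"
proof -
  have f: "finite (fibS sg (y # a) (w # b))" for sg
    using finite_fib unfolding fibS_def by (rule finite_subset[rotated]) auto
  show ?thesis using fib_split[OF assms] card_Un_disjoint[OF f f] by simp
qed

lemma fibS_cons2:
  assumes "1 \<le> v" "sg = 1 \<or> sg = -1"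
  shows "fibS sg (x # y # a) (v # w # b) = Cons (sg * int v) ` {t \<in> fib (y # a) (w # b). Cc x y (sg * int v) (hd t)}"
  unfolding fibS_def fib_cons2 using assms by (auto simp: abs_mult)

lemma card_fibS_cons2:
  assumes "1 \<le> v" "sg = 1 \<or> sg = -1"
  shows "card (fibS sg (x # y # a) (v # w # b)) = card {t \<in> fib (y # a) (w # b). Cc x y (sg * int v) (hd t)}"
  unfolding fibS_cons2[OF assms] by (rule card_image) simp

lemma rank_lt: "0 < v \<Longrightarrow> v < w \<Longrightarrow> (s = v \<or> s = -v) \<Longrightarrow> (t = w \<or> t = -w) \<Longrightarrow> prec_rank s < prec_rank t"
  unfolding prec_rank_def by auto

lemma cP_lt:
  assumes "1 \<le> v" "v < w" "sg = 1 \<or> sg = -1"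
  shows "card (fibS sg (x # y # a) (v # w # b)) = card (fib (y # a) (w # b))"
proof -
  have "{t \<in> fib (y # a) (w # b). Cc x y (sg * int v) (hd t)} = fib (y # a) (w # b)"
  proof (intro equalityI subsetI)
    fix t assume t: "t \<in> fib (y # a) (w # b)"
    then have h: "hd t = int w \<or> hd t = - int w" using fib_hd[OF t] assms by simp
    have "prec_rank (sg * int v) < prec_rank (hd t)" using rank_lt[of "int v" "int w" _ "hd t"] h assms by auto
    moreover have "sg * int v \<noteq> hd t" using h assms by auto
    ultimately show "t \<in> {t \<in> fib (y # a) (w # b). Cc x y (sg * int v) (hd t)}" using t unfolding Cc_def by simp
  qed auto
  then show ?thesis using card_fibS_cons2[OF assms(1,3)] by simp
qed

lemma cP_eq:
  assumes "1 \<le> v"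
  shows "card (fibS 1 (x # y # a) (v # v # b)) = (if x < y then card (fibS 1 (y # a) (v # b)) else 0)"
proof -
  have "{t \<in> fib (y # a) (v # b). Cc x y (1 * int v) (hd t)} = (if x < y then fibS 1 (y # a) (v # b) else {})"
  proof (intro equalityI subsetI)
    fix t assume t: "t \<in> {t \<in> fib (y # a) (v # b). Cc x y (1 * int v) (hd t)}"
    then have h: "hd t = int v \<or> hd t = - int v" using fib_hd[of t y a v b] assms by simp
    show "t \<in> (if x < y then fibS 1 (y # a) (v # b) else {})"
      using t h assms unfolding Cc_def prec_rank_def fibS_def by (auto split: if_splits)
  next
    fix t assume t: "t \<in> (if x < y then fibS 1 (y # a) (v # b) else {})"
    then show "t \<in> {t \<in> fib (y # a) (v # b). Cc x y (1 * int v) (hd t)}"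
      using assms unfolding Cc_def prec_rank_def fibS_def by (auto split: if_splits)
  qed
  then show ?thesis using card_fibS_cons2[OF assms, of 1] by simp
qed

lemma cN_eq:
  assumes "1 \<le> v"
  shows "card (fibS (-1) (x # y # a) (v # v # b)) =
    card (fibS 1 (y # a) (v # b)) + (if y < x then card (fibS (-1) (y # a) (v # b)) else 0)"
proof -
  have f: "finite (fibS sg (y # a) (v # b))" for sg
    using finite_fib unfolding fibS_def by (rule finite_subset[rotated]) auto
  have "{t \<in> fib (y # a) (v # b). Cc x y (-1 * int v) (hd t)} = fibS 1 (y # a) (v # b) \<union> (if y < x then fibS (-1) (y # a) (v # b) else {})"
  proof (intro equalityI subsetI)
    fix t assume t: "t \<in> {t \<in> fib (y # a) (v # b). Cc x y (-1 * int v) (hd t)}"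
    then have h: "hd t = int v \<or> hd t = - int v" using fib_hd[of t y a v b] assms by simp
    show "t \<in> fibS 1 (y # a) (v # b) \<union> (if y < x then fibS (-1) (y # a) (v # b) else {})"
      using t h assms unfolding Cc_def prec_rank_def fibS_def by (auto split: if_splits)
  next
    fix t assume t: "t \<in> fibS 1 (y # a) (v # b) \<union> (if y < x then fibS (-1) (y # a) (v # b) else {})"
    then show "t \<in> {t \<in> fib (y # a) (v # b). Cc x y (-1 * int v) (hd t)}"
      using assms unfolding Cc_def prec_rank_def fibS_def by (auto split: if_splits)
  qed
  moreover have "fibS 1 (y # a) (v # b) \<inter> fibS (-1) (y # a) (v # b) = {}"
    using fib_split(2)[OF assms] .
  ultimately show ?thesis using card_fibS_cons2[OF assms, of "-1"] f
    by (simp add: card_Un_disjoint)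
qed

definition W :: "nat list \<Rightarrow> nat list \<Rightarrow> rat" where
  "W a b = (if CX C (map int a) b then (2::rat) powi (int (card (set b)) - int (gamma (map int a) b)) else 0)"

fun bi :: "nat list \<Rightarrow> nat list \<Rightarrow> bool" where
  "bi (x # y # a) (v # w # b) = (v < w \<or> (x < y \<and> bi (y # a) (w # b)))"
| "bi _ _ = True"


lemma W_Nil: "W [] [] = 1"
  unfolding W_def CX_def gamma_def by simp

lemma W_single: "1 \<le> v \<Longrightarrow> W [x] [v] = 2"
  unfolding W_def using CX_single[of x v] gamma_single[of "int x" v] by simp

lemma gamma_cons2_int:
  "gamma (map int (x # y # a)) (v # w # b) = (if x = y \<and> v = w then 1 else 0) + gamma (map int (y # a)) (w # b)"
  using gamma_cons2[of "int x" "int y" "map int a" v w b] by simp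

lemma pw_succ: "(2::rat) powi (k + 1 - g) = 2 * 2 powi (k - g)"
proof -
  have e: "k + 1 - g = (k - g) + 1" by simp
  show ?thesis unfolding e using power_int_add_1[of "2::rat" "k - g"] by (simp add: mult.commute)
qed

lemma pw_succ': "(2::rat) powi (1 + k - g) = 2 * 2 powi (k - g)"
  using pw_succ[of k g] by (simp add: add.commute)

lemma pw_pred: "(2::rat) powi (k - (1 + g)) = 2 powi (k - g) / 2"
proof -
  have e: "k - g = (k - (1 + g)) + 1" by simp
  have "(2::rat) powi (k - g) = 2 powi (k - (1 + g)) * 2" unfolding e using power_int_add_1[of "2::rat" "k - (1 + g)"] by simp
  then show ?thesis by simp
qed

lemma W_lt:
  assumes "length b = length a" "sorted (v # w # b)" "1 \<le> v" "v < w"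
  shows "W (x # y # a) (v # w # b) = 2 * W (y # a) (w # b)"
proof -
  have pk: "a \<noteq> [] \<and> x \<le> y \<and> hd a \<le> y \<longrightarrow> v < hd b"
  proof
    assume "a \<noteq> [] \<and> x \<le> y \<and> hd a \<le> y"
    then have "b \<noteq> []" using assms(1) by auto
    then have "w \<le> hd b" using assms(2) by (cases b) auto
    then show "v < hd b" using assms(4) by simp
  qed
  have cx: "CX C (map int (x # y # a)) (v # w # b) \<longleftrightarrow> CX C (map int (y # a)) (w # b)"
    using CX_cons2[OF assms(1)] pk assms(3,4) by simp
  have g: "gamma (map int (x # y # a)) (v # w # b) = gamma (map int (y # a)) (w # b)"
    using gamma_cons2_int assms(4) by simp
  have c: "card (set (v # w # b)) = card (set (w # b)) + 1" using card_set_cons2[OF assms(2)] assms(4) by simp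
  have "(2::rat) powi (int (card (set (w # b))) + 1 - int (gamma (map int (y # a)) (w # b)))
        = 2 * 2 powi (int (card (set (w # b))) - int (gamma (map int (y # a)) (w # b)))"
    by (rule pw_succ)
  then show ?thesis unfolding W_def cx g c by (simp add: pw_succ')
qed


lemma W_eq:
  assumes "length b = length a" "sorted (v # v # b)" "1 \<le> v"
  shows "W (x # y # a) (v # v # b) =
    (if (a \<noteq> [] \<and> x \<le> y \<and> hd a \<le> y \<longrightarrow> v < hd b) then (if x = y then W (y # a) (v # b) / 2 else W (y # a) (v # b)) else 0)"
proof -
  have cx: "CX C (map int (x # y # a)) (v # v # b) \<longleftrightarrow> (a \<noteq> [] \<and> x \<le> y \<and> hd a \<le> y \<longrightarrow> v < hd b) \<and> CX C (map int (y # a)) (v # b)"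
    using CX_cons2[OF assms(1)] assms(3) by simp
  have g: "gamma (map int (x # y # a)) (v # v # b) = (if x = y then 1 else 0) + gamma (map int (y # a)) (v # b)"
    using gamma_cons2_int by simp
  have c: "card (set (v # v # b)) = card (set (v # b))" by simp
  have "(2::rat) powi (int (card (set (v # b))) - (1 + int (gamma (map int (y # a)) (v # b))))
        = 2 powi (int (card (set (v # b))) - int (gamma (map int (y # a)) (v # b))) / 2"
    by (rule pw_pred)
  then show ?thesis unfolding W_def cx g c by (simp split: if_split)
qed

lemma fibS_single: "1 \<le> v \<Longrightarrow> (sg = 1 \<or> sg = -1) \<Longrightarrow> fibS sg [x] [v] = {[sg * int v]}"
  unfolding fibS_def using fib_single[of v x] by force

lemma sorted_tail: "sorted (v # b) \<Longrightarrow> sorted b" by simp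


lemma fib_main:
  "length b = length a \<Longrightarrow> a \<noteq> [] \<Longrightarrow> sorted b \<Longrightarrow> \<forall>z\<in>set b. 1 \<le> z \<Longrightarrow>
   of_nat (card (fibS 1 a b)) + of_nat (card (fibS (-1) a b)) = W a b \<and>
   of_nat (card (fibS 1 a b)) = (if bi a b then W a b / 2 else 0) \<and>
   (\<forall>x y a' w b'. a = x # y # a' \<longrightarrow> b = w # w # b' \<longrightarrow> x < y \<longrightarrow> \<not> bi a b \<longrightarrow> W a b = 0)"
proof (induction a arbitrary: b)
  case Nil then show ?case by simp
next
  case (Cons x a)
  show ?case
  proof (cases "a = []")
    case True
    then obtain v where b: "b = [v]" using Cons(2) by (cases b) auto
    have v: "1 \<le> v" using Cons(5) b by simp
    have "card (fibS 1 [x] [v]) = 1" "card (fibS (-1) [x] [v]) = 1"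
      using fibS_single[OF v] by auto
    then show ?thesis using W_single[OF v] True b by simp
  next
    case False
    then obtain y a' where Cons2: "a = y # a'" by (cases a) auto
    obtain v w b' where b: "b = v # w # b'" using Cons(2) Cons2
      by (cases b; cases "tl b") auto
    have lb: "length b' = length a'" using Cons(2) b Cons2 by simp
    have so: "sorted (v # w # b')" using Cons(4) b by simp
    have pos: "\<forall>z\<in>set (w # b'). 1 \<le> z" "1 \<le> v" using Cons(5) b by auto
    have IH: "of_nat (card (fibS 1 (y # a') (w # b'))) + of_nat (card (fibS (-1) (y # a') (w # b'))) = W (y # a') (w # b') \<and>
      of_nat (card (fibS 1 (y # a') (w # b'))) = (if bi (y # a') (w # b') then W (y # a') (w # b') / 2 else 0) \<and>
      (\<forall>x ya a'' wa b''. y # a' = x # ya # a'' \<longrightarrow> w # b' = wa # wa # b'' \<longrightarrow> x < ya \<longrightarrow> \<not> bi (y # a') (w # b') \<longrightarrow> W (y # a') (w # b') = 0)"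
      using Cons.IH[of "w # b'"] Cons2 lb so pos by simp
    define A where "A = (of_nat (card (fibS 1 (y # a') (w # b'))) :: rat)"
    define B where "B = (of_nat (card (fibS (-1) (y # a') (w # b'))) :: rat)"
    define W' where "W' = W (y # a') (w # b')"
    have I1: "A + B = W'" and I2: "A = (if bi (y # a') (w # b') then W' / 2 else 0)"
      using IH unfolding A_def B_def W'_def by auto
    have I3: "\<And>ya a'' b''. a' = ya # a'' \<Longrightarrow> b' = w # b'' \<Longrightarrow> y < ya \<Longrightarrow> \<not> bi (y # a') (w # b') \<Longrightarrow> W' = 0"
      using IH unfolding W'_def by blast
    have cf: "card (fib (y # a') (w # b')) = card (fibS 1 (y # a') (w # b')) + card (fibS (-1) (y # a') (w # b'))"
      using card_fib_split pos by simp
    show ?thesis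
    proof (cases "v < w")
      case True
      have "card (fibS 1 (x # y # a') (v # w # b')) = card (fib (y # a') (w # b'))"
        "card (fibS (-1) (x # y # a') (v # w # b')) = card (fib (y # a') (w # b'))"
        using cP_lt[OF pos(2) True] by auto
      moreover have "W (x # y # a') (v # w # b') = 2 * W'" unfolding W'_def using W_lt[OF lb so pos(2) True] .
      ultimately show ?thesis using Cons2 b cf I1 True unfolding A_def B_def by simp
    next
      case False
      then have vw: "w = v" using so by simp
      define PK where "PK = (a' \<noteq> [] \<and> x \<le> y \<and> hd a' \<le> y \<longrightarrow> v < hd b')"
      have Weq: "W (x # y # a') (v # v # b') = (if PK then (if x = y then W' / 2 else W') else 0)"
        using W_eq[OF lb _ pos(2), of x y] so vw unfolding PK_def W'_def by simp
      have cP: "of_nat (card (fibS 1 (x # y # a') (v # v # b'))) = (if x < y then A else 0)"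
        using cP_eq[OF pos(2)] vw unfolding A_def by simp
      have cN: "of_nat (card (fibS (-1) (x # y # a') (v # v # b'))) = A + (if y < x then B else 0)"
        using cN_eq[OF pos(2)] vw unfolding A_def B_def by simp
      have biT: "bi (x # y # a') (v # v # b') = (x < y \<and> bi (y # a') (v # b'))" by simp
      have PK_bi: "PK" if "bi (y # a') (v # b')"
      proof -
        have "v < hd b'" if h: "a' \<noteq> []" "hd a' \<le> y"
        proof -
          obtain ya a'' where a': "a' = ya # a''" using h(1) by (cases a') auto
          obtain wb b'' where b': "b' = wb # b''" using lb a' by (cases b') auto
          have "v < wb \<or> (y < ya \<and> bi (ya # a'') (wb # b''))" using \<open>bi (y # a') (v # b')\<close> a' b' by simp
          then show ?thesis using h(2) a' b' by auto
        qed
        then show ?thesis unfolding PK_def by blast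
      qed
      have K: "W (x # y # a') (v # v # b') = 0" if nb: "\<not> bi (y # a') (v # b')" and xy: "x \<le> y"
      proof -
        have "a' \<noteq> []"
        proof
          assume "a' = []" then show False using nb by simp
        qed
        then obtain ya a'' where a': "a' = ya # a''" by (cases a') auto
        obtain wb b'' where b': "b' = wb # b''" using lb a' by (cases b') auto
        have wb: "wb = v" using so vw b' nb a' by auto
        have nb2: "\<not> (y < ya \<and> bi (ya # a'') (wb # b''))" using nb a' b' wb by simp
        show ?thesis
        proof (cases "y < ya")
          case True
          then have "W' = 0" using I3[OF a' _ True] b' wb nb vw by simp
          then show ?thesis using Weq by simp
        next
          case False
          then have "\<not> PK" unfolding PK_def using a' b' wb xy by simp
          then show ?thesis using Weq by simp
        qed
      qed
      consider "x < y" | "y < x" | "x = y" by linarith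
      then show ?thesis
      proof cases
        case 1
        show ?thesis
        proof (cases "bi (y # a') (v # b')")
          case True
          then have "A = W' / 2" using I2 vw by simp
          moreover have "W (x # y # a') (v # v # b') = W'" using Weq PK_bi[OF True] 1 by simp
          ultimately show ?thesis using Cons2 b vw cP cN 1 True by simp
        next
          case False
          then have "A = 0" using I2 vw by simp
          moreover have "W (x # y # a') (v # v # b') = 0" using K[OF False] 1 by simp
          ultimately show ?thesis using Cons2 b vw cP cN 1 False by simp
        qed
      next
        case 2
        have "PK" unfolding PK_def using 2 by simp
        then have "W (x # y # a') (v # v # b') = W'" using Weq 2 by simp
        then show ?thesis using Cons2 b vw cP cN 2 I1 by simp
      next
        case 3
        show ?thesis
        proof (cases "bi (y # a') (v # b')")
          case True
          then have "A = W' / 2" using I2 vw by simp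
          moreover have "W (x # y # a') (v # v # b') = W' / 2" using Weq PK_bi[OF True] 3 by simp
          ultimately show ?thesis using Cons2 b vw cP cN 3 True by simp
        next
          case False
          then have "A = 0" using I2 vw by simp
          moreover have "W (x # y # a') (v # v # b') = 0" using K[OF False] 3 by simp
          ultimately show ?thesis using Cons2 b vw cP cN 3 False by simp
        qed
      qed
    qed
  qed
qed

lemma card_fib_W:
  assumes "length b = length a" "sorted b" "\<forall>z\<in>set b. 1 \<le> z"
  shows "of_nat (card (fib a b)) = W a b"
proof (cases a)
  case Nil
  then show ?thesis using assms fib_Nil W_Nil by simp
next
  case (Cons y a')
  then obtain w b' where b: "b = w # b'" using assms(1) by (cases b) auto
  have w: "1 \<le> w" using assms(3) b by simp
  have "card (fib a b) = card (fibS 1 a b) + card (fibS (-1) a b)"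
    using card_fib_split[OF w] Cons b by simp
  then show ?thesis using fib_main[OF assms(1) _ assms(2,3)] Cons by simp
qed

definition PP :: "nat list \<Rightarrow> nat \<Rightarrow> nat list set" where
  "PP ws N = {\<pi>. multiperm \<pi> \<and> \<pi> \<in> HA (wordS ws) \<and> length \<pi> \<le> N}"

definition cc :: "nat list \<Rightarrow> nat list \<Rightarrow> rat poly" where
  "cc ws \<pi> = (if multiperm \<pi> \<and> \<pi> \<in> HA (wordS ws) then beta ^ (length \<pi> - lenA (wordS ws)) else 0)"

lemma beta_pow_nz: "beta ^ k \<noteq> 0"
  unfolding beta_def by (simp add: monom_eq_0_iff)

lemma cc_nz: "cc ws \<pi> \<noteq> 0 \<longleftrightarrow> multiperm \<pi> \<and> \<pi> \<in> HA (wordS ws)"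
  unfolding cc_def using beta_pow_nz by auto

lemma multiperm_mperm: "multiperm (mperm a)"
  unfolding multiperm_def using remdups_adj_adjacent by (metis Suc_eq_plus1)

lemma HA_mperm: "a \<in> HA s \<Longrightarrow> mperm a \<in> HA s"
  unfolding HA_def using demA_mperm by simp

lemma HA_mperm_rev: "mperm a \<in> HA s \<Longrightarrow> a \<in> HA s"
  unfolding HA_def using demA_mperm by simp

lemma finite_PP: assumes ws: "\<forall>i\<in>set ws. 1 \<le> i" shows "finite (PP ws N)"
proof -
  have "PP ws N \<subseteq> {xs. set xs \<subseteq> {..<Suc (sum_list ws)} \<and> length xs \<le> N}"
    unfolding PP_def using HA_letters_bound[OF ws] by auto
  then show ?thesis using finite_lists_length_le[of "{..<Suc (sum_list ws)}" N] finite_subset by blast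
qed

lemma len_HA: assumes ws: "\<forall>i\<in>set ws. 1 \<le> i" "\<pi> \<in> HA (wordS ws)"
  shows "lenA (wordS ws) \<le> length \<pi>"
  using lenA_demA_le[of \<pi>] assms(2) unfolding HA_def by auto

lemma group_mperm:
  assumes ws: "\<forall>i\<in>set ws. 1 \<le> i"
    and fin: "finite {(a, t). a \<in> HA (wordS ws) \<and> R a t}"
    and len: "\<And>a t. R a t \<Longrightarrow> length a \<le> N"
  shows "(\<Sum>(a, t) \<in> {(a, t). a \<in> HA (wordS ws) \<and> R a t}. beta ^ (length a - lenA (wordS ws)))
     = (\<Sum>\<pi> \<in> PP ws N. cc ws \<pi> * (\<Sum>(a, t) \<in> {(a, t). mperm a = \<pi> \<and> R a t}. beta ^ (length a - length \<pi>)))"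
proof -
  let ?S = "{(a, t). a \<in> HA (wordS ws) \<and> R a t}"
  let ?h = "\<lambda>(a, t). beta ^ (length a - lenA (wordS ws))"
  let ?g = "\<lambda>x. mperm (fst x)"
  have gS: "?g ` ?S \<subseteq> PP ws N"
  proof
    fix p assume "p \<in> ?g ` ?S"
    then obtain a t where at: "p = mperm a" "a \<in> HA (wordS ws)" "R a t" by auto
    have "length (mperm a) \<le> N" using len[OF at(3)] remdups_adj_length[of a] by linarith
    then show "p \<in> PP ws N" unfolding PP_def using at HA_mperm multiperm_mperm by auto
  qed
  have "(\<Sum>x\<in>?S. ?h x) = (\<Sum>\<pi> \<in> PP ws N. \<Sum>x \<in> {x \<in> ?S. ?g x = \<pi>}. ?h x)"
    using sum.group[OF fin finite_PP[OF ws] gS, of ?h] by simp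
  also have "\<dots> = (\<Sum>\<pi> \<in> PP ws N. cc ws \<pi> * (\<Sum>(a, t) \<in> {(a, t). mperm a = \<pi> \<and> R a t}. beta ^ (length a - length \<pi>)))"
  proof (rule sum.cong[OF refl])
    fix \<pi> assume \<pi>: "\<pi> \<in> PP ws N"
    have set_eq: "{x \<in> ?S. ?g x = \<pi>} = {(a, t). mperm a = \<pi> \<and> R a t}"
      using \<pi> HA_mperm_rev unfolding PP_def by auto
    have ccp: "cc ws \<pi> = beta ^ (length \<pi> - lenA (wordS ws))" using \<pi> unfolding PP_def cc_def by simp
    have lp: "lenA (wordS ws) \<le> length \<pi>" using len_HA[OF ws] \<pi> unfolding PP_def by simp
    have "cc ws \<pi> * (\<Sum>(a, t) \<in> {(a, t). mperm a = \<pi> \<and> R a t}. beta ^ (length a - length \<pi>))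
        = (\<Sum>(a, t) \<in> {(a, t). mperm a = \<pi> \<and> R a t}. cc ws \<pi> * beta ^ (length a - length \<pi>))"
      by (simp add: sum_distrib_left case_prod_unfold)
    also have "\<dots> = (\<Sum>x \<in> {(a, t). mperm a = \<pi> \<and> R a t}. ?h x)"
    proof (rule sum.cong[OF refl])
      fix x assume x: "x \<in> {(a, t). mperm a = \<pi> \<and> R a t}"
      obtain a t where at: "x = (a, t)" "mperm a = \<pi>" using x by auto
      have "length \<pi> \<le> length a" using at remdups_adj_length[of a] by simp
      then have "length \<pi> - lenA (wordS ws) + (length a - length \<pi>) = length a - lenA (wordS ws)"
        using lp by simp
      then show "(case x of (a, t) \<Rightarrow> cc ws \<pi> * beta ^ (length a - length \<pi>)) = ?h x"
        using at ccp by (simp add: power_add[symmetric])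
    qed
    finally show "(\<Sum>x \<in> {x \<in> ?S. ?g x = \<pi>}. ?h x) = cc ws \<pi> * (\<Sum>(a, t) \<in> {(a, t). mperm a = \<pi> \<and> R a t}. beta ^ (length a - length \<pi>))"
      unfolding set_eq by simp
  qed
  finally show ?thesis by simp
qed

lemma sum_restrict_PP:
  assumes ws: "\<forall>i\<in>set ws. 1 \<le> i"
    and F: "\<And>\<pi>. F \<pi> \<noteq> 0 \<Longrightarrow> length \<pi> \<le> N"
  shows "(\<Sum>\<pi> \<in> {\<pi>. cc ws \<pi> \<noteq> 0 \<and> F \<pi> \<noteq> 0}. cc ws \<pi> * F \<pi>) = (\<Sum>\<pi> \<in> PP ws N. cc ws \<pi> * F \<pi>)"
    and "finite {\<pi>. cc ws \<pi> \<noteq> 0 \<and> F \<pi> \<noteq> 0}"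
proof -
  have sub: "{\<pi>. cc ws \<pi> \<noteq> 0 \<and> F \<pi> \<noteq> 0} \<subseteq> PP ws N" unfolding PP_def cc_nz using F by auto
  show "finite {\<pi>. cc ws \<pi> \<noteq> 0 \<and> F \<pi> \<noteq> 0}" using finite_subset[OF sub finite_PP[OF ws]] .
  show "(\<Sum>\<pi> \<in> {\<pi>. cc ws \<pi> \<noteq> 0 \<and> F \<pi> \<noteq> 0}. cc ws \<pi> * F \<pi>) = (\<Sum>\<pi> \<in> PP ws N. cc ws \<pi> * F \<pi>)"
    by (rule sum.mono_neutral_left[OF finite_PP[OF ws] sub]) auto
qed

abbreviation absn :: "int \<Rightarrow> nat" where "absn x \<equiv> nat \<bar>x\<bar>"

lemma mono_mset: assumes "mono b = mono b'" shows "mset b = mset b'"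
proof (rule multiset_eqI)
  fix x show "count (mset b) x = count (mset b') x" using fun_cong[OF assms[unfolded mono_def], of x] by simp
qed

definition Nm :: "(nat \<Rightarrow> nat) \<Rightarrow> nat" where
  "Nm m = (if \<exists>b. mono b = m then length (SOME b. mono b = m) else 0)"

lemma Nm_len: "mono b = m \<Longrightarrow> length b = Nm m"
proof -
  assume h: "mono b = m"
  then have ex: "\<exists>b. mono b = m" by blast
  have "mono (SOME b. mono b = m) = m" using someI_ex[OF ex] .
  then have e: "mset b = mset (SOME b. mono b = m)" using h mono_mset by simp
  have "length b = length (SOME b. mono b = m)" using arg_cong[OF e, of size] by simp
  then show ?thesis unfolding Nm_def using ex by simp
qed

lemma finite_mono: "finite {b. mono b = m}"
proof (cases "\<exists>b. mono b = m")
  case True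
  then obtain b0 where b0: "mono b0 = m" by blast
  have "{b. mono b = m} \<subseteq> {b. set b \<subseteq> set b0 \<and> length b = length b0}"
  proof
    fix b assume "b \<in> {b. mono b = m}"
    then have e: "mset b = mset b0" using b0 mono_mset by simp
    have "set b = set b0" using arg_cong[OF e, of set_mset] by simp
    moreover have "length b = length b0" using arg_cong[OF e, of size] by simp
    ultimately show "b \<in> {b. set b \<subseteq> set b0 \<and> length b = length b0}" by simp
  qed
  then show ?thesis using finite_lists_length_eq[of "set b0" "length b0"] finite_subset by blast
next
  case False then show ?thesis by simp
qed

lemma finite_absmap: "finite {s. map absn s = b}"
proof -
  let ?M = "int (Max (insert 0 (set b)))"
  have "{s. map absn s = b} \<subseteq> {s. set s \<subseteq> {-?M..?M} \<and> length s = length b}"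
  proof
    fix s assume "s \<in> {s. map absn s = b}"
    then have mb: "map absn s = b" by simp
    have "\<bar>z\<bar> \<le> ?M" if "z \<in> set s" for z
    proof -
      have "nat \<bar>z\<bar> \<in> set b" using that mb by force
      then have "nat \<bar>z\<bar> \<le> Max (insert 0 (set b))" by simp
      then show ?thesis by simp
    qed
    then have "set s \<subseteq> {-?M..?M}"
      by (meson abs_le_D1 abs_le_D2 atLeastAtMost_iff minus_le_iff subsetI)
    moreover have "length s = length b" using mb by auto
    ultimately show "s \<in> {s. set s \<subseteq> {-?M..?M} \<and> length s = length b}" by simp
  qed
  moreover have "finite {s. set s \<subseteq> {-?M..?M} \<and> length s = length b}"
    by (rule finite_lists_length_eq) simp
  ultimately show ?thesis using finite_subset by blast
qed

lemma finite_mono_abs: "finite {s. mono (map absn s) = m}"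
proof -
  have "{s. mono (map absn s) = m} = (\<Union>b \<in> {b. mono b = m}. {s. map absn s = b})" by auto
  then show ?thesis using finite_mono finite_absmap by simp
qed

lemma HA_fin_set:
  assumes ws: "\<forall>i\<in>set ws. 1 \<le> i"
    and R: "\<And>a t. R a t \<Longrightarrow> length a \<le> N \<and> t \<in> T" and fT: "finite T"
  shows "finite {(a, t). a \<in> HA (wordS ws) \<and> R a t}"
proof -
  have "{(a, t). a \<in> HA (wordS ws) \<and> R a t} \<subseteq> {a. set a \<subseteq> {..<Suc (sum_list ws)} \<and> length a \<le> N} \<times> T"
  proof
    fix p assume "p \<in> {(a, t). a \<in> HA (wordS ws) \<and> R a t}"
    then obtain a t where p: "p = (a, t)" "a \<in> HA (wordS ws)" "R a t" by auto
    have "set a \<subseteq> {..<Suc (sum_list ws)}" using HA_letters_bound[OF ws p(2)] by auto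
    then show "p \<in> {a. set a \<subseteq> {..<Suc (sum_list ws)} \<and> length a \<le> N} \<times> T" using p R[OF p(3)] by simp
  qed
  moreover have "finite ({a. set a \<subseteq> {..<Suc (sum_list ws)} \<and> length a \<le> N} \<times> T)"
    using finite_lists_length_le[of "{..<Suc (sum_list ws)}" N] fT by simp
  ultimately show ?thesis using finite_subset by blast
qed

lemma CA_len: "CA a b \<Longrightarrow> length b = length a" unfolding CA_def by simp

lemma UK_len: "UK a s \<Longrightarrow> length s = length a" unfolding UK_def by simp

lemma sum_nz_ne: "(\<Sum>x\<in>S. f x) \<noteq> (0::'a::comm_monoid_add) \<Longrightarrow> \<exists>x. x \<in> S"
  by (cases "S = {}") auto

theorem GA_Theta_part:
  assumes ws: "\<forall>i\<in>set ws. 1 \<le> i"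
  shows "GA (wordS ws) m = (\<Sum>\<pi> \<in> {\<pi>. cc ws \<pi> \<noteq> 0 \<and> Lfun \<pi> m \<noteq> 0}. cc ws \<pi> * Lfun \<pi> m)"
    and "finite {\<pi>. cc ws \<pi> \<noteq> 0 \<and> Lfun \<pi> m \<noteq> 0}"
proof -
  have R: "\<And>a b. CA a b \<and> mono b = m \<Longrightarrow> length a \<le> Nm m \<and> b \<in> {b. mono b = m}"
    using CA_len Nm_len by fastforce
  have fin: "finite {(a, b). a \<in> HA (wordS ws) \<and> CA a b \<and> mono b = m}"
    using HA_fin_set[OF ws R finite_mono] .
  have F: "length \<pi> \<le> Nm m" if h: "Lfun \<pi> m \<noteq> 0" for \<pi>
  proof -
    obtain a b where "mperm a = \<pi>" "CA a b" "mono b = m"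
      using sum_nz_ne[OF h[unfolded Lfun_def]] by auto
    then show ?thesis using remdups_adj_length[of a] CA_len Nm_len by fastforce
  qed
  have "GA (wordS ws) m = (\<Sum>\<pi> \<in> PP ws (Nm m). cc ws \<pi> * Lfun \<pi> m)"
    unfolding GA_def Lfun_def
    using group_mperm[where R="\<lambda>a b. CA a b \<and> mono b = m" and N="Nm m", OF ws fin] R by simp
  then show "GA (wordS ws) m = (\<Sum>\<pi> \<in> {\<pi>. cc ws \<pi> \<noteq> 0 \<and> Lfun \<pi> m \<noteq> 0}. cc ws \<pi> * Lfun \<pi> m)"
    using sum_restrict_PP(1)[OF ws, of "\<lambda>\<pi>. Lfun \<pi> m", OF F] by simp
  show "finite {\<pi>. cc ws \<pi> \<noteq> 0 \<and> Lfun \<pi> m \<noteq> 0}"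
    using sum_restrict_PP(2)[OF ws, of "\<lambda>\<pi>. Lfun \<pi> m", OF F] by simp
qed

theorem K_Theta_part:
  assumes ws: "\<forall>i\<in>set ws. 1 \<le> i"
  shows "(\<Sum>(a, s) \<in> {(a, s). a \<in> HA (wordS ws) \<and> UK a s \<and> mono (map absn s) = m}. beta ^ (length a - lenA (wordS ws)))
      = (\<Sum>\<pi> \<in> {\<pi>. cc ws \<pi> \<noteq> 0 \<and> Kfun \<pi> m \<noteq> 0}. cc ws \<pi> * Kfun \<pi> m)"
    and "finite {\<pi>. cc ws \<pi> \<noteq> 0 \<and> Kfun \<pi> m \<noteq> 0}"
proof -
  have R: "length a \<le> Nm m \<and> s \<in> {s. mono (map absn s) = m}" if h: "UK a s \<and> mono (map absn s) = m" for a s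
  proof -
    have "length (map absn s) = Nm m" using Nm_len h by simp
    moreover have "length s = length a" using UK_len h by blast
    ultimately show ?thesis using h by simp
  qed
  have fin: "finite {(a, s). a \<in> HA (wordS ws) \<and> UK a s \<and> mono (map absn s) = m}"
    using HA_fin_set[OF ws R finite_mono_abs] .
  have F: "length \<pi> \<le> Nm m" if h: "Kfun \<pi> m \<noteq> 0" for \<pi>
  proof -
    obtain a s where "mperm a = \<pi>" "UK a s" "mono (map absn s) = m"
      using sum_nz_ne[OF h[unfolded Kfun_def]] by auto
    moreover have "length (map absn s) = Nm m" using Nm_len calculation(3) by simp
    moreover have "length s = length a" using UK_len calculation(2) by blast
    ultimately show ?thesis using remdups_adj_length[of a] by simp
  qed
  have "(\<Sum>(a, s) \<in> {(a, s). a \<in> HA (wordS ws) \<and> UK a s \<and> mono (map absn s) = m}. beta ^ (length a - lenA (wordS ws)))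
       = (\<Sum>\<pi> \<in> PP ws (Nm m). cc ws \<pi> * Kfun \<pi> m)"
    unfolding Kfun_def
    using group_mperm[where R="\<lambda>a s. UK a s \<and> mono (map absn s) = m" and N="Nm m", OF ws fin] R by simp
  then show "(\<Sum>(a, s) \<in> {(a, s). a \<in> HA (wordS ws) \<and> UK a s \<and> mono (map absn s) = m}. beta ^ (length a - lenA (wordS ws)))
      = (\<Sum>\<pi> \<in> {\<pi>. cc ws \<pi> \<noteq> 0 \<and> Kfun \<pi> m \<noteq> 0}. cc ws \<pi> * Kfun \<pi> m)"
    using sum_restrict_PP(1)[OF ws, of "\<lambda>\<pi>. Kfun \<pi> m", OF F] by simp
  show "finite {\<pi>. cc ws \<pi> \<noteq> 0 \<and> Kfun \<pi> m \<noteq> 0}"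
    using sum_restrict_PP(2)[OF ws, of "\<lambda>\<pi>. Kfun \<pi> m", OF F] by simp
qed

lemma smult_of_nat: "smult (of_nat n) p = (of_nat n :: rat poly) * p"
  by (induction n) (simp_all add: smult_add_left algebra_simps)

lemma CX_X_C:
  assumes "\<forall>j\<in>set a'. 1 \<le> j \<and> (X = D \<longrightarrow> 2 \<le> j)"
  shows "CX X a' b = CX C a' b"
proof -
  have "\<not> ((X = B \<and> a' ! i = 0 \<and> a' ! (i + 1) = 0) \<or> (X = D \<and> a' ! i = a' ! (i + 1) \<and> \<bar>a' ! i\<bar> = 1))"
    if "i + 1 < length a'" for i
  proof -
    have "a' ! i \<in> set a'" using that by simp
    then show ?thesis using assms by fastforce
  qed
  then show ?thesis unfolding CX_def by auto
qed

lemma oX_0: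
  assumes "\<forall>j\<in>set a'. 1 \<le> j \<and> (X = D \<longrightarrow> 2 \<le> j)"
  shows "oX X a' = 0"
proof -
  have "filter (\<lambda>j. j = 0) a' = []" using assms by (auto simp: filter_empty_conv)
  moreover have "X = D \<Longrightarrow> filter (\<lambda>j. \<bar>j\<bar> = 1) a' = []" using assms by (fastforce simp: filter_empty_conv)
  ultimately show ?thesis unfolding oX_def by (cases X) auto
qed

lemma rank_abs: "x \<noteq> 0 \<Longrightarrow> y \<noteq> 0 \<Longrightarrow> prec_rank x \<le> prec_rank y \<Longrightarrow> absn x \<le> absn y"
  unfolding prec_rank_def by (auto split: if_splits)

lemma UK_props:
  assumes "UK a s"
  shows "sorted (map absn s) \<and> (\<forall>z\<in>set (map absn s). 1 \<le> z) \<and> length (map absn s) = length a"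
proof -
  have nz: "\<forall>x\<in>set s. x \<noteq> 0" and so: "sorted (map prec_rank s)" and l: "length s = length a"
    using assms unfolding UK_def by auto
  have "sorted_wrt (\<lambda>x y. prec_rank x \<le> prec_rank y) s" using so by (simp add: sorted_wrt_map)
  then have "sorted_wrt (\<lambda>x y. absn x \<le> absn y) s"
    by (rule sorted_wrt_mono_rel[rotated]) (use nz rank_abs in auto)
  then have "sorted (map absn s)" by (simp add: sorted_wrt_map)
  moreover have "\<forall>z\<in>set (map absn s). 1 \<le> z" using nz by auto
  ultimately show ?thesis using l by simp
qed

lemma CXC_props: "CX C (map int a) b \<Longrightarrow> sorted b \<and> (\<forall>z\<in>set b. 1 \<le> z) \<and> length b = length a"
  unfolding CX_def by simp

theorem GX_part:
  assumes ws: "\<forall>i\<in>set ws. 1 \<le> i" and d: "X = D \<Longrightarrow> wordT ws 1 = 1"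
  shows "GX X (wordT ws) m =
    (\<Sum>(a, s) \<in> {(a, s). a \<in> HA (wordS ws) \<and> UK a s \<and> mono (map absn s) = m}. beta ^ (length a - lenA (wordS ws)))"
proof -
  let ?\<sigma> = "wordS ws"
  let ?l = "lenA ?\<sigma>"
  have lw: "lenX X (wordT ws) = ?l" using wordT_lift[OF ws] lenX_lift[OF wordS_finA[OF ws]] by simp
  let ?f = "\<lambda>(a', b). smult ((2::rat) powi (int (card (set b)) - int (gamma a' b) - int (oX X a')))
            (beta ^ (length a' - lenX X (wordT ws)))"
  let ?S1 = "{(a, b). a \<in> HA ?\<sigma> \<and> CX X (map int a) b \<and> mono b = m}"
  let ?S2 = "{(a, b). a \<in> HA ?\<sigma> \<and> (sorted b \<and> (\<forall>z\<in>set b. 1 \<le> z) \<and> length b = length a \<and> mono b = m)}"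
  let ?SK = "{(a, s). a \<in> HA ?\<sigma> \<and> UK a s \<and> mono (map absn s) = m}"
  let ?h = "\<lambda>(a::nat list, s::int list). beta ^ (length a - ?l)"
  let ?F = "\<lambda>(a, b). smult (W a b) (beta ^ (length a - ?l))"
  have lett: "\<forall>j\<in>set (map int a). 1 \<le> j \<and> (X = D \<longrightarrow> 2 \<le> j)" if "a \<in> HA ?\<sigma>" for a
  proof -
    have "map int a \<in> HX X (wordT ws)" using HX_eq[OF ws d] that by simp
    from HX_letters[OF ws d this] show ?thesis .
  qed
  let ?R2 = "\<lambda>a b. sorted b \<and> (\<forall>z\<in>set b. 1 \<le> z) \<and> length b = length a \<and> mono b = m"
  have R2: "length a \<le> Nm m \<and> b \<in> {b. mono b = m}" if h: "?R2 a b" for a b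
  proof -
    have "length b = Nm m" using Nm_len h by simp
    then show ?thesis using h by simp
  qed
  have finS2: "finite ?S2" using HA_fin_set[where R = ?R2, OF ws R2 finite_mono] by simp
  have SX: "{(a', b). a' \<in> HX X (wordT ws) \<and> CX X a' b \<and> mono b = m} = (\<lambda>(a, b). (map int a, b)) ` ?S1"
  proof (intro equalityI subsetI)
    fix p assume "p \<in> {(a', b). a' \<in> HX X (wordT ws) \<and> CX X a' b \<and> mono b = m}"
    then obtain a' b where p: "p = (a', b)" "a' \<in> HX X (wordT ws)" "CX X a' b" "mono b = m" by auto
    then obtain a where a: "a' = map int a" "a \<in> HA ?\<sigma>" using HX_eq[OF ws d] by auto
    then have "(a, b) \<in> ?S1" using p by simp
    then show "p \<in> (\<lambda>(a, b). (map int a, b)) ` ?S1" using p a by force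
  next
    fix p assume "p \<in> (\<lambda>(a, b). (map int a, b)) ` ?S1"
    then obtain a b where p: "p = (map int a, b)" "a \<in> HA ?\<sigma>" "CX X (map int a) b" "mono b = m" by auto
    then have "map int a \<in> HX X (wordT ws)" using HX_eq[OF ws d] by auto
    then show "p \<in> {(a', b). a' \<in> HX X (wordT ws) \<and> CX X a' b \<and> mono b = m}" using p by simp
  qed
  have inj: "inj_on (\<lambda>(a::nat list, b::nat list). (map int a, b)) ?S1"
    by (auto simp: inj_on_def inj_map_eq_map)
  have "GX X (wordT ws) m = (\<Sum>x \<in> ?S1. ?f ((\<lambda>(a, b). (map int a, b)) x))"
    unfolding GX_def SX using sum.reindex[OF inj, of ?f] by (simp add: case_prod_unfold)
  also have "\<dots> = (\<Sum>x \<in> ?S1. ?F x)"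
  proof (rule sum.cong[OF refl])
    fix x assume x: "x \<in> ?S1"
    obtain a b where ab: "x = (a, b)" "a \<in> HA ?\<sigma>" "CX X (map int a) b" using x by auto
    have cx: "CX C (map int a) b" using ab CX_X_C[OF lett[OF ab(2)]] by simp
    have o: "oX X (map int a) = 0" using oX_0[OF lett[OF ab(2)]] .
    show "?f ((\<lambda>(a, b). (map int a, b)) x) = ?F x" using ab cx o lw unfolding W_def by simp
  qed
  also have "\<dots> = (\<Sum>x \<in> ?S2. ?F x)"
  proof (rule sum.mono_neutral_left)
    show "finite ?S2" by (rule finS2)
    show "?S1 \<subseteq> ?S2"
    proof
      fix x assume "x \<in> ?S1"
      then obtain a b where ab: "x = (a, b)" "a \<in> HA ?\<sigma>" "CX X (map int a) b" "mono b = m" by auto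
      have "CX C (map int a) b" using ab CX_X_C[OF lett[OF ab(2)]] by simp
      then show "x \<in> ?S2" using CXC_props ab by simp
    qed
    show "\<forall>x\<in>?S2 - ?S1. ?F x = 0"
    proof
      fix x assume x: "x \<in> ?S2 - ?S1"
      obtain a b where ab: "x = (a, b)" "a \<in> HA ?\<sigma>" "\<not> CX X (map int a) b" using x by auto
      have "\<not> CX C (map int a) b" using ab CX_X_C[OF lett[OF ab(2)]] by simp
      then show "?F x = 0" using ab unfolding W_def by simp
    qed
  qed
  also have "\<dots> = (\<Sum>y \<in> ?S2. \<Sum>x \<in> {x \<in> ?SK. (\<lambda>(a, s). (a, map absn s)) x = y}. ?h x)"
  proof (rule sum.cong[OF refl])
    fix y assume y: "y \<in> ?S2"
    obtain a b where ab: "y = (a, b)" "a \<in> HA ?\<sigma>" "sorted b" "\<forall>z\<in>set b. 1 \<le> z" "length b = length a" "mono b = m"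
      using y by auto
    have e: "{x \<in> ?SK. (\<lambda>(a, s). (a, map absn s)) x = y} = Pair a ` fib a b"
      unfolding fib_def using ab by auto
    have "(\<Sum>x \<in> {x \<in> ?SK. (\<lambda>(a, s). (a, map absn s)) x = y}. ?h x) = (\<Sum>s \<in> fib a b. ?h (a, s))"
      unfolding e by (subst sum.reindex) (auto simp: inj_on_def)
    also have "\<dots> = of_nat (card (fib a b)) * beta ^ (length a - ?l)" by simp
    also have "\<dots> = ?F y" using card_fib_W[OF ab(5,3,4)] ab(1) smult_of_nat[of "card (fib a b)"]
      by (simp del: of_nat_simps)
    finally show "?F y = (\<Sum>x \<in> {x \<in> ?SK. (\<lambda>(a, s). (a, map absn s)) x = y}. ?h x)" by simp
  qed
  also have "\<dots> = (\<Sum>x \<in> ?SK. ?h x)"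
  proof (rule sum.group)
    have R: "length a \<le> Nm m \<and> s \<in> {s. mono (map absn s) = m}" if h: "UK a s \<and> mono (map absn s) = m" for a s
    proof -
      have "length (map absn s) = Nm m" using Nm_len h by simp
      moreover have "length s = length a" using UK_len h by blast
      ultimately show ?thesis using h by simp
    qed
    show "finite ?SK"
      using HA_fin_set[where R = "\<lambda>a s. UK a s \<and> mono (map absn s) = m", OF ws R finite_mono_abs] by simp
    show "finite ?S2" by (rule finS2)
    show "(\<lambda>(a, s). (a, map absn s)) ` ?SK \<subseteq> ?S2"
    proof
      fix y assume "y \<in> (\<lambda>(a, s). (a, map absn s)) ` ?SK"
      then obtain a s where as: "y = (a, map absn s)" "a \<in> HA ?\<sigma>" "UK a s" "mono (map absn s) = m" by auto
      then show "y \<in> ?S2" using UK_props[OF as(3)] by simp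
    qed
  qed
  finally show ?thesis by (simp add: case_prod_unfold)
qed

lemma beta_pow_int: "beta ^ k = map_poly rat_of_int (monom 1 k)"
  unfolding beta_def by (simp add: map_poly_monom monom_power)

lemma cc_range: "cc ws \<pi> \<in> range (map_poly rat_of_int)"
proof (cases "multiperm \<pi> \<and> \<pi> \<in> HA (wordS ws)")
  case True
  then have "cc ws \<pi> = map_poly rat_of_int (monom 1 (length \<pi> - lenA (wordS ws)))"
    unfolding cc_def using beta_pow_int by simp
  then show ?thesis by simp
next
  case False
  then have "cc ws \<pi> = 0" using cc_nz[of ws \<pi>] by blast
  then have "cc ws \<pi> = map_poly rat_of_int 0" by simp
  then show ?thesis by blast
qed

theorem proposition4p6:
  fixes X :: ctype and "is" :: "nat list"
  assumes "\<forall>i\<in>set is. 1 \<le> i"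
    and "X = D \<Longrightarrow> wordT is 1 = 1"
  shows "Theta_rel (GA (wordS is)) (GX X (wordT is))"
  unfolding Theta_rel_def
proof (intro exI[of _ "cc is"] conjI allI)
  fix \<pi>
  show "cc is \<pi> \<noteq> 0 \<longrightarrow> multiperm \<pi> \<and> (\<forall>x\<in>set \<pi>. 1 \<le> x)"
    unfolding cc_nz HA_def by auto
  show "cc is \<pi> \<in> range (map_poly rat_of_int)" by (rule cc_range)
next
  fix m
  show "finite {\<pi>. cc is \<pi> \<noteq> 0 \<and> Lfun \<pi> m \<noteq> 0}" by (rule GA_Theta_part(2)[OF assms(1)])
  show "finite {\<pi>. cc is \<pi> \<noteq> 0 \<and> Kfun \<pi> m \<noteq> 0}" by (rule K_Theta_part(2)[OF assms(1)])
  show "GA (wordS is) m = (\<Sum>\<pi> \<in> {\<pi>. cc is \<pi> \<noteq> 0 \<and> Lfun \<pi> m \<noteq> 0}. cc is \<pi> * Lfun \<pi> m)"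
    by (rule GA_Theta_part(1)[OF assms(1)])
  show "GX X (wordT is) m = (\<Sum>\<pi> \<in> {\<pi>. cc is \<pi> \<noteq> 0 \<and> Kfun \<pi> m \<noteq> 0}. cc is \<pi> * Kfun \<pi> m)"
    using GX_part[OF assms] K_Theta_part(1)[OF assms(1)] by simp
qed

end
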